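(* Let $(Z_i)_{i\in\mathbb{Z}}$ be i.i.d. zero-mean random vectors in $\mathbb{R}^d$ that are regularly varying with exponent $\alpha>1$ and tail measure $\nu$, let $\mathcal{A}$ be an invertible $d\times d$ matrix, and let $\Gamma$ be an admissible failure set. Let $f:\mathbb{R}\times\mathbb{R}^d\to\mathbb{R}_+$ be a nonnegative continuous function. Then \[\lim_{n\to\infty}\frac1n\sum_{i=0}^{n-1}E\Big[\exp\big(-f(i/n,\mathcal{A}Z_i/n)\big)\,\Big|\,\mathcal{A}Z_i\in n\Gamma\Big]=E\big[\exp(-f(U,X))\big],\] where $U$ is a standard uniform random variable independent of a random vector $X$ with law $P(X\in\cdot)=\nu\big(\mathcal{A}^{-1}(\cdot\cap\Gamma)\big)/\nu(\mathcal{A}^{-1}\Gamma)$.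
   Context: All vector norms are Euclidean. A random vector $Z_0$ in $\mathbb{R}^d$ is regularly varying with exponent $\alpha$ and tail measure $\nu$ if $\nu$ is a nonzero Radon measure on $[-\infty,\infty]^d\setminus\{0\}$ with $P(Z_0\in u\,\cdot)/P(\|Z_0\|>u)\to\nu(\cdot)$ vaguely as $u\to\infty$, and $\nu(c\Phi)=c^{-\alpha}\nu(\Phi)$ for all measurable $\Phi$, $c>0$. A set $\Gamma\subset\mathbb{R}^d$ is an admissible failure set if it is measurable, $\Gamma\subset\{y:\|y\|>\delta_0\}$ for some $\delta_0>0$, $\nu(\mathcal{A}^{-1}\Gamma)>0$ and $\nu(\partial(\mathcal{A}^{-1}\Gamma))=0$. *)

theory Defs
  imports "HOL-Probability.Probability"
begin

text \<open>The compactified space [-\<infinity>,\<infinity>]^d is modelled as the type ereal^'d with its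
  product topology; R^d embeds into it coordinatewise.\<close>

definition ext_emb :: "real^'d \<Rightarrow> ereal^'d" where
  "ext_emb x = (\<chi> i. ereal (x $ i))"

definition ext_scale :: "real \<Rightarrow> (ereal^'d) set \<Rightarrow> (ereal^'d) set" where
  "ext_scale c \<Phi> = (\<lambda>x. \<chi> i. ereal c * x $ i) ` \<Phi>"

text \<open>Regular variation of a random vector Z with exponent \<alpha> and tail measure \<nu>:
  \<nu> is a nonzero Radon measure on [-\<infinity>,\<infinity>]^d minus {0} (Borel, no mass at 0, finite on
  compact sets avoiding 0), homogeneous of order -\<alpha>, and
  P(Z \<in> u \<cdot>)/P(\<parallel>Z\<parallel> > u) converges vaguely to \<nu>, i.e. integrals of every continuous
  function with compact support in [-\<infinity>,\<infinity>]^d minus {0} converge.\<close>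

definition regularly_varying ::
  "'a measure \<Rightarrow> ('a \<Rightarrow> real^'d) \<Rightarrow> real \<Rightarrow> (ereal^'d) measure \<Rightarrow> bool" where
  "regularly_varying M Z \<alpha> \<nu> \<longleftrightarrow>
     Z \<in> borel_measurable M \<and>
     sets \<nu> = sets borel \<and>
     emeasure \<nu> {0} = 0 \<and>
     emeasure \<nu> (space \<nu> - {0}) \<noteq> 0 \<and>
     (\<forall>K. compact K \<and> 0 \<notin> K \<longrightarrow> emeasure \<nu> K < \<infinity>) \<and>
     (\<forall>c>0. \<forall>\<Phi>\<in>sets borel. emeasure \<nu> (ext_scale c \<Phi>) = ennreal (c powr (-\<alpha>)) * emeasure \<nu> \<Phi>) \<and>
     (\<forall>g :: ereal^'d \<Rightarrow> real. continuous_on UNIV g \<and>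
        (\<exists>K. compact K \<and> 0 \<notin> K \<and> (\<forall>x. x \<notin> K \<longrightarrow> g x = 0)) \<longrightarrow>
        ((\<lambda>u. (\<integral>\<omega>. g (ext_emb (inverse u *\<^sub>R Z \<omega>)) \<partial>M)
                / measure M {\<omega>\<in>space M. norm (Z \<omega>) > u})
          \<longlongrightarrow> (\<integral>x. g x \<partial>\<nu>)) at_top)"

definition admissible_failure_set ::
  "(ereal^'d) measure \<Rightarrow> real^'d^'d \<Rightarrow> (real^'d) set \<Rightarrow> bool" where
  "admissible_failure_set \<nu> A \<Gamma> \<longleftrightarrow>
     \<Gamma> \<in> sets borel \<and>
     (\<exists>\<delta>0>0. \<Gamma> \<subseteq> {y. norm y > \<delta>0}) \<and>
     emeasure \<nu> (ext_emb ` ((\<lambda>y. matrix_inv A *v y) ` \<Gamma>)) > 0 \<and>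
     emeasure \<nu> (frontier (ext_emb ` ((\<lambda>y. matrix_inv A *v y) ` \<Gamma>))) = 0"

definition cond_exp_event :: "'a measure \<Rightarrow> ('a \<Rightarrow> real) \<Rightarrow> 'a set \<Rightarrow> real" where
  "cond_exp_event M h B = (\<integral>\<omega>. indicator B \<omega> * h \<omega> \<partial>M) / measure M B"

end

theory Submission
  imports Defs
begin

lemma compact_UNIV_ereal_vec: "compact (UNIV :: (ereal^'d) set)"
proof -
  have "compact_space (product_topology (\<lambda>i::'d. (euclidean :: ereal topology)) UNIV)"
    unfolding compact_space_product_topology
    by (simp add: compact_space_def compact_UNIV)
  then have "compact (UNIV :: ('d \<Rightarrow> ereal) set)"
    by (simp add: euclidean_product_topology compact_space_def)
  then have "compact ((\<lambda>f. \<chi> i. f i) ` (UNIV :: ('d \<Rightarrow> ereal) set))"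
    by (intro compact_continuous_image continuous_on_vec_lambda continuous_on_product_coordinates)
  moreover have "(\<lambda>f. \<chi> i. f i) ` (UNIV :: ('d \<Rightarrow> ereal) set) = UNIV"
    by (metis surj_def vec_lambda_eta)
  ultimately show ?thesis by simp
qed

lemma closed_imp_compact_E: "closed (S :: (ereal^'d) set) \<Longrightarrow> compact S"
  using closed_Int_compact[OF _ compact_UNIV_ereal_vec] by simp

lemma cont_nth: "continuous_on S (\<lambda>y::'a::topological_space^'d. y $ i)"
  unfolding continuous_on_def by (auto intro: tendsto_vec_nth tendsto_ident_at)

definition clampE :: "real \<Rightarrow> ereal \<Rightarrow> ereal" where
  "clampE C z = max (- ereal C) (min (ereal C) z)"

definition piC :: "real \<Rightarrow> ereal^'d \<Rightarrow> real^'d" where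
  "piC C y = (\<chi> i. real_of_ereal (clampE C (y $ i)))"

definition kap :: "real \<Rightarrow> real^'d \<Rightarrow> real^'d" where
  "kap C x = (\<chi> i. max (- C) (min C (x $ i)))"

definition rp :: "ereal^'d \<Rightarrow> real^'d" where
  "rp y = (\<chi> i. real_of_ereal (y $ i))"

lemma continuous_clampE: "0 \<le> C \<Longrightarrow> continuous_on UNIV (\<lambda>z. real_of_ereal (clampE C z))"
proof -
  assume C: "0 \<le> C"
  have c1: "continuous_on UNIV (clampE C)"
    unfolding clampE_def by (intro continuous_intros)
  have "clampE C z \<noteq> \<infinity> \<and> clampE C z \<noteq> -\<infinity>" for z
    by (cases z) (auto simp: clampE_def max_def min_def)
  then have "clampE C ` UNIV \<subseteq> UNIV - {\<infinity>, -\<infinity>}"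
    by auto
  then have "continuous_on (clampE C ` UNIV) real_of_ereal"
    using continuous_on_real continuous_on_subset by blast
  then show ?thesis
    using continuous_on_compose[OF c1] by (simp add: o_def)
qed

lemma continuous_piC: "0 \<le> C \<Longrightarrow> continuous_on UNIV (piC C)"
  unfolding piC_def
  by (intro continuous_on_vec_lambda continuous_on_compose2[OF continuous_clampE]
      cont_nth) auto

lemma clampE_ereal: "clampE C (ereal r) = ereal (max (-C) (min C r))"
  by (auto simp: clampE_def max_def min_def)

lemma piC_ext_emb: "piC C (ext_emb x) = kap C x"
  by (simp add: piC_def kap_def ext_emb_def clampE_def vec_eq_iff max_def min_def)

lemma piC_zero: "0 \<le> C \<Longrightarrow> piC C 0 = 0"
proof -
  assume "0 \<le> C"
  have "(0::ereal^'d) = ext_emb 0" by (simp add: ext_emb_def vec_eq_iff zero_ereal_def)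
  moreover have "kap C (0::real^'d) = 0" using \<open>0 \<le> C\<close> by (simp add: kap_def vec_eq_iff)
  ultimately show ?thesis by (metis piC_ext_emb)
qed

lemma kap_id: "norm x \<le> C \<Longrightarrow> kap C x = x"
proof -
  assume "norm x \<le> C"
  then have "\<bar>x $ i\<bar> \<le> C" for i using component_le_norm_cart[of x i] by linarith
  then have "max (- C) (min C (x $ i)) = x $ i" for i
    using abs_le_iff[of "x $ i" C] by (metis max.absorb2 min.absorb2 minus_le_iff)
  then show ?thesis by (auto simp: kap_def vec_eq_iff)
qed

lemma kap_far: "0 \<le> C \<Longrightarrow> kap C x \<noteq> x \<Longrightarrow> C \<le> norm (kap C x)"
proof -
  assume "0 \<le> C" "kap C x \<noteq> x"
  then obtain i where "kap C x $ i \<noteq> x $ i" by (auto simp: vec_eq_iff)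
  then have "\<bar>kap C x $ i\<bar> = C" using \<open>0 \<le> C\<close> by (auto simp: kap_def max_def min_def)
  then show ?thesis using component_le_norm_cart[of "kap C x" i] by linarith
qed

lemma piC_inf: "0 \<le> C \<Longrightarrow> \<bar>y $ i\<bar> = \<infinity> \<Longrightarrow> C \<le> norm (piC C y)"
proof -
  assume "0 \<le> C" "\<bar>y $ i\<bar> = \<infinity>"
  then have "\<bar>piC C y $ i\<bar> = C"
    by (cases "y $ i") (auto simp: piC_def clampE_def max_def min_def)
  then show ?thesis using component_le_norm_cart[of "piC C y" i] by linarith
qed

lemma abs_piC_le: "0 \<le> C \<Longrightarrow> ereal \<bar>piC C y $ i\<bar> \<le> \<bar>y $ i\<bar>"
  by (cases "y $ i") (auto simp: piC_def clampE_def max_def min_def)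

lemma norm_big_coord:
  fixes x :: "real^'d"
  assumes "\<rho> \<le> norm x"
  shows "\<exists>i. \<rho> / real CARD('d) \<le> \<bar>x $ i\<bar>"
proof (rule ccontr)
  assume "\<not> ?thesis"
  then have lt: "\<bar>x $ i\<bar> < \<rho> / real CARD('d)" for i by (meson not_le)
  have "norm x \<le> (\<Sum>i\<in>UNIV. \<bar>x $ i\<bar>)" by (rule norm_le_l1_cart)
  also have "\<dots> < (\<Sum>i\<in>(UNIV::'d set). \<rho> / real CARD('d))"
    by (rule sum_strict_mono) (auto intro: lt)
  also have "\<dots> = \<rho>" by simp
  finally show False using assms by simp
qed

definition Sr :: "real \<Rightarrow> (ereal^'d) set" where
  "Sr r = {y. \<exists>i. ereal r \<le> \<bar>y $ i\<bar>}"

lemma closed_Sr: "0 \<le> r \<Longrightarrow> closed (Sr r :: (ereal^'d) set)"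
proof -
  assume r: "0 \<le> r"
  have "ereal r \<le> \<bar>z\<bar> \<longleftrightarrow> z \<le> - ereal r \<or> ereal r \<le> z" for z
    using r by (cases z) auto
  then have eq: "{z::ereal. ereal r \<le> \<bar>z\<bar>} = {..- ereal r} \<union> {ereal r..}"
    by auto
  have "closed {z::ereal. ereal r \<le> \<bar>z\<bar>}" unfolding eq by (intro closed_Un closed_atMost closed_atLeast)
  then have "closed ((\<lambda>y::ereal^'d. y $ i) -` {z::ereal. ereal r \<le> \<bar>z\<bar>})" for i
    by (rule closed_vimage_vec_nth)
  then have "closed (\<Union>i. (\<lambda>y::ereal^'d. y $ i) -` {z::ereal. ereal r \<le> \<bar>z\<bar>})"
    by (intro closed_UN) auto
  moreover have "Sr r = (\<Union>i. (\<lambda>y::ereal^'d. y $ i) -` {z::ereal. ereal r \<le> \<bar>z\<bar>})"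
    by (auto simp: Sr_def)
  ultimately show ?thesis by simp
qed

lemma Sr_mono: "r \<le> r' \<Longrightarrow> Sr r' \<subseteq> Sr r"
  by (auto simp: Sr_def) (meson ereal_less_eq(3) order_trans)

lemma zero_notin_Sr: "0 < r \<Longrightarrow> 0 \<notin> Sr r"
  by (auto simp: Sr_def)

lemma ext_scale_Sr: "0 < r \<Longrightarrow> ext_scale r (Sr 1) = Sr r"
proof (safe)
  assume r: "0 < r"
  fix y assume "y \<in> ext_scale r (Sr 1)"
  then obtain z where z: "z \<in> Sr 1" "y = (\<chi> i. ereal r * z $ i)" by (auto simp: ext_scale_def)
  then obtain i where "ereal 1 \<le> \<bar>z $ i\<bar>" by (auto simp: Sr_def)
  then have "ereal r \<le> \<bar>ereal r * z $ i\<bar>" using r by (cases "z $ i") (auto simp: abs_mult)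
  then show "y \<in> Sr r" using z by (auto simp: Sr_def)
next
  assume r: "0 < r"
  fix y assume "y \<in> Sr r"
  then obtain i where i: "ereal r \<le> \<bar>y $ i\<bar>" by (auto simp: Sr_def)
  define z where "z = (\<chi> i. ereal (1/r) * y $ i)"
  have "ereal 1 \<le> \<bar>z $ i\<bar>" using i r
    by (cases "y $ i") (auto simp: z_def abs_mult field_simps)
  then have "z \<in> Sr 1" by (auto simp: Sr_def)
  moreover have "y = (\<chi> i. ereal r * z $ i)"
  proof -
    have "ereal r * (ereal (1/r) * w) = w" for w using r by (cases w) auto
    then show ?thesis by (simp add: z_def vec_eq_iff)
  qed
  ultimately show "y \<in> ext_scale r (Sr 1)" by (auto simp: ext_scale_def)
qed

lemma piC_big_Sr: fixes y :: "ereal^'d" shows "0 \<le> C \<Longrightarrow> \<rho> \<le> norm (piC C y) \<Longrightarrow> y \<in> Sr (\<rho> / real CARD('d))"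
proof -
  assume C: "0 \<le> C" and "\<rho> \<le> norm (piC C y)"
  then obtain i where "\<rho> / real CARD('d) \<le> \<bar>piC C y $ i\<bar>" using norm_big_coord[of \<rho> "piC C y"] by blast
  then have "ereal (\<rho> / real CARD('d)) \<le> \<bar>y $ i\<bar>" using abs_piC_le[OF C, of y i] 
    by (metis ereal_less_eq(3) order_trans)
  then show ?thesis by (auto simp: Sr_def)
qed

lemma ext_emb_big_Sr: fixes x :: "real^'d" shows "\<rho> \<le> norm x \<Longrightarrow> ext_emb x \<in> Sr (\<rho> / real CARD('d))"
proof -
  assume "\<rho> \<le> norm x"
  then obtain i where "\<rho> / real CARD('d) \<le> \<bar>x $ i\<bar>" using norm_big_coord[of \<rho> x] by blast
  then show ?thesis by (auto simp: Sr_def ext_emb_def)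
qed

lemma meas_nth_E[measurable]: "(\<lambda>y::ereal^'d. y $ i) \<in> borel_measurable borel"
  by (rule borel_measurable_continuous_onI[OF cont_nth])

lemma meas_rp[measurable]: "(rp :: ereal^'d \<Rightarrow> real^'d) \<in> borel_measurable borel"
  unfolding rp_def
  by (subst borel_measurable_euclidean_space) (auto simp: Basis_vec_def inner_axis)

lemma cont_ext_emb: "continuous_on UNIV (ext_emb :: real^'d \<Rightarrow> ereal^'d)"
  unfolding ext_emb_def
  by (intro continuous_on_vec_lambda continuous_on_ereal) (auto intro: cont_nth)

lemma meas_ext_emb[measurable]: "(ext_emb :: real^'d \<Rightarrow> ereal^'d) \<in> borel_measurable borel"
  by (rule borel_measurable_continuous_onI[OF cont_ext_emb])

lemma rp_ext_emb[simp]: "rp (ext_emb x) = x"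
  by (simp add: rp_def ext_emb_def)

lemma inj_ext_emb: "inj ext_emb"
  by (metis injI rp_ext_emb)

lemma ext_emb_image_eq: "ext_emb ` S = {y. (\<forall>i. \<bar>y $ i\<bar> \<noteq> \<infinity>) \<and> rp y \<in> S}"
proof
  show "ext_emb ` S \<subseteq> {y. (\<forall>i. \<bar>y $ i\<bar> \<noteq> \<infinity>) \<and> rp y \<in> S}"
    by (auto, auto simp: ext_emb_def)
next
  show "{y. (\<forall>i. \<bar>y $ i\<bar> \<noteq> \<infinity>) \<and> rp y \<in> S} \<subseteq> ext_emb ` S"
  proof
  fix y assume "y \<in> {y. (\<forall>i. \<bar>y $ i\<bar> \<noteq> \<infinity>) \<and> rp y \<in> S}"
  then have "\<forall>i. \<bar>y $ i\<bar> \<noteq> \<infinity>" "rp y \<in> S" by auto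
  then have "y = ext_emb (rp y)"
    by (auto simp: vec_eq_iff ext_emb_def rp_def ereal_real)
  then show "y \<in> ext_emb ` S" using \<open>rp y \<in> S\<close> by blast
  qed
qed

lemma sets_ext_emb_image[measurable]: "S \<in> sets borel \<Longrightarrow> (ext_emb ` S :: (ereal^'d) set) \<in> sets borel"
proof -
  assume [measurable]: "S \<in> sets borel"
  have "{y::ereal^'d. (\<forall>i. \<bar>y $ i\<bar> \<noteq> \<infinity>) \<and> rp y \<in> S} \<in> sets borel"
    by measurable
  then show ?thesis by (simp add: ext_emb_image_eq)
qed

lemma frontier_ext_emb:
  fixes x :: "real^'d"
  assumes "x \<in> frontier W"
  shows "ext_emb x \<in> frontier (ext_emb ` W)"
proof -
  have "x \<in> closure W" "x \<notin> interior W" using assms by (auto simp: frontier_def)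
  have "ext_emb ` closure W \<subseteq> closure (ext_emb ` W)"
    by (intro image_closure_subset continuous_on_subset[OF cont_ext_emb]) (auto intro: closure_subset[THEN subsetD])
  then have c: "ext_emb x \<in> closure (ext_emb ` W)" using \<open>x \<in> closure W\<close> by auto
  have "ext_emb x \<notin> interior (ext_emb ` W)"
  proof
    assume "ext_emb x \<in> interior (ext_emb ` W)"
    then obtain Op where Op: "open Op" "ext_emb x \<in> Op" "Op \<subseteq> ext_emb ` W"
      by (meson interiorE)
    have "open (ext_emb -` Op)" using Op(1) cont_ext_emb by (rule open_vimage)
    moreover have "x \<in> ext_emb -` Op" using Op by auto
    moreover have "ext_emb -` Op \<subseteq> W" using Op(3) inj_ext_emb by (auto dest: injD)
    ultimately have "x \<in> interior W" by (meson interiorI)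
    then show False using \<open>x \<notin> interior W\<close> by simp
  qed
  then show ?thesis using c by (simp add: frontier_def)
qed

lemma kap_inv: "0 \<le> C \<Longrightarrow> (\<And>x. C \<le> norm x \<Longrightarrow> h x = 0) \<Longrightarrow> h (kap C x) = h x"
proof -
  assume C: "0 \<le> C" and h: "\<And>x. C \<le> norm x \<Longrightarrow> h x = 0"
  show ?thesis
  proof (cases "kap C x = x")
    case False
    then have "C \<le> norm (kap C x)" by (rule kap_far[OF C])
    moreover have "C \<le> norm x" by (metis False kap_id linorder_le_cases)
    ultimately show ?thesis using h by simp
  qed simp
qed

definition tailf :: "real \<Rightarrow> real^'d \<Rightarrow> real" where "tailf R x = min 1 (max 0 (norm x - R))"
definition jf :: "real \<Rightarrow> real^'d \<Rightarrow> real" where "jf d x = min 1 (max 0 (4 / d * norm x - 1))"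
definition cutf :: "real \<Rightarrow> real^'d \<Rightarrow> real" where "cutf R x = min 1 (max 0 (R + 2 - norm x))"
definition uf :: "real \<Rightarrow> (real^'d) set \<Rightarrow> real^'d \<Rightarrow> real" where "uf k F x = max 0 (1 - k * infdist x F)"
definition lf :: "real \<Rightarrow> (real^'d) set \<Rightarrow> real^'d \<Rightarrow> real" where "lf k G x = min 1 (k * infdist x G)"

lemma cont_tailf: "continuous_on UNIV (tailf R)" unfolding tailf_def by (intro continuous_intros)
lemma cont_jf: "continuous_on UNIV (jf d)" unfolding jf_def by (intro continuous_intros)
lemma cont_cutf: "continuous_on UNIV (cutf R)" unfolding cutf_def by (intro continuous_intros)
lemma cont_uf: "continuous_on UNIV (uf k F)" unfolding uf_def by (intro continuous_intros)
lemma cont_lf: "continuous_on UNIV (lf k F)" unfolding lf_def by (intro continuous_intros)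

lemma tailf_kap_one: "0 \<le> R \<Longrightarrow> R + 1 < norm x \<Longrightarrow> tailf R (kap (R+1) x) = 1"
proof -
  assume R: "0 \<le> R" and x: "R + 1 < norm x"
  have "R + 1 \<le> norm (kap (R+1) x)"
  proof (cases "kap (R+1) x = x")
    case True then show ?thesis using x by simp
  next
    case False then show ?thesis using kap_far[of "R+1" x] R by simp
  qed
  then show ?thesis by (simp add: tailf_def)
qed

lemma jf_kap_one: "0 < d \<Longrightarrow> d / 2 \<le> norm x \<Longrightarrow> jf d (kap (d/2) x) = 1"
proof -
  assume d: "0 < d" and x: "d / 2 \<le> norm x"
  have n: "d / 2 \<le> norm (kap (d/2) x)"
  proof (cases "kap (d/2) x = x")
    case True then show ?thesis using x by simp
  next
    case False then show ?thesis using kap_far[of "d/2" x] d by simp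
  qed
  have "1 \<le> 4 / d * norm (kap (d/2) x) - 1"
    using n d by (simp add: field_simps)
  then show ?thesis by (simp add: jf_def)
qed

lemma tailf_bounds: "0 \<le> tailf R x" "tailf R x \<le> 1" by (auto simp: tailf_def)
lemma jf_bounds: "0 \<le> jf d x" "jf d x \<le> 1" by (auto simp: jf_def)
lemma cutf_bounds: "0 \<le> cutf R x" "cutf R x \<le> 1" by (auto simp: cutf_def)
lemma uf_bounds: "0 \<le> uf k F x" "uf k F x \<le> 1" if "0 \<le> k"
  using that infdist_nonneg[of x F] by (auto simp: uf_def)
lemma lf_bounds: "0 \<le> lf k F x" "lf k F x \<le> 1" if "0 \<le> k"
  using that infdist_nonneg[of x F] by (auto simp: lf_def)

lemma jf_abs: "\<bar>jf d x\<bar> \<le> 1" by (auto simp: jf_def)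
lemma tailf_abs: "\<bar>tailf d x\<bar> \<le> 1" by (auto simp: tailf_def)

lemma eventually_mult_ge1: "0 < a \<Longrightarrow> eventually (\<lambda>k::nat. 1 \<le> real k * a) sequentially"
proof -
  assume a: "0 < a"
  obtain N :: nat where "1 / a \<le> real N" using real_arch_simple by blast
  have "1 \<le> real k * a" if "N \<le> k" for k
  proof -
    have "1 / a \<le> real k" using \<open>1 / a \<le> real N\<close> that by (meson of_nat_le_iff order_trans)
    then have "(1 / a) * a \<le> real k * a" using a by (intro mult_right_mono) auto
    then show ?thesis using a by simp
  qed
  then have "\<forall>k\<ge>N. 1 \<le> real k * a" by blast
  then show ?thesis by (auto simp: eventually_sequentially)
qed

locale RVs =
  fixes M :: "'a measure" and Y :: "'a \<Rightarrow> real^'d" and \<alpha> :: real and \<nu> :: "(ereal^'d) measure"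
  assumes PS: "prob_space M" and RV: "regularly_varying M Y \<alpha> \<nu>" and alpha: "0 < \<alpha>"
begin

lemma sets_nu: "sets \<nu> = sets borel" using RV by (simp add: regularly_varying_def)

lemma space_nu[simp]: "space \<nu> = UNIV"
  using sets_eq_imp_space_eq[OF sets_nu] by simp

lemma Sr_sets: "0 \<le> r \<Longrightarrow> Sr r \<in> sets \<nu>"
  using borel_closed[OF closed_Sr[of r]] sets_nu by simp

lemma Sr_fin: "0 < r \<Longrightarrow> emeasure \<nu> (Sr r) < \<infinity>"
  using RV closed_imp_compact_E[OF closed_Sr[of r]] zero_notin_Sr[of r]
  unfolding regularly_varying_def by auto

lemma Sr_scale: "0 < r \<Longrightarrow> emeasure \<nu> (Sr r) = ennreal (r powr (-\<alpha>)) * emeasure \<nu> (Sr 1)"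
proof -
  assume r: "0 < r"
  have "Sr 1 \<in> sets borel" using borel_closed[OF closed_Sr[of 1]] by simp
  then show ?thesis using RV r ext_scale_Sr[OF r] unfolding regularly_varying_def by metis
qed

lemma Sr_tendsto: "((\<lambda>r. measure \<nu> (Sr r)) \<longlongrightarrow> 0) at_top"
proof -
  have "((\<lambda>r. r powr (-\<alpha>) * measure \<nu> (Sr 1)) \<longlongrightarrow> 0 * measure \<nu> (Sr 1)) at_top"
    by (intro tendsto_mult tendsto_const tendsto_neg_powr filterlim_ident) (use alpha in simp)
  moreover have "eventually (\<lambda>r. r powr (-\<alpha>) * measure \<nu> (Sr 1) = measure \<nu> (Sr r)) at_top"
    using eventually_gt_at_top[of 0]
  proof eventually_elim
    case (elim r)
    then show ?case using Sr_scale[OF elim] Sr_fin[of 1]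
      by (simp add: measure_def enn2real_mult)
  qed
  ultimately show ?thesis by (simp add: tendsto_cong)
qed

definition q :: "real \<Rightarrow> real" where
  "q u = measure M {\<omega>\<in>space M. norm (Y \<omega>) > u}"

lemma TF:
  assumes C: "0 \<le> C" and h: "continuous_on UNIV h" and rho: "0 < \<rho>"
    and h0: "\<And>x. norm x < \<rho> \<Longrightarrow> h x = 0"
  shows "((\<lambda>u. (\<integral>\<omega>. h (kap C (inverse u *\<^sub>R Y \<omega>)) \<partial>M) / q u) \<longlongrightarrow> (\<integral>y. h (piC C y) \<partial>\<nu>)) at_top"
proof -
  let ?g = "\<lambda>y. h (piC C y)"
  have cg: "continuous_on UNIV ?g"
    using continuous_on_compose[OF continuous_piC[OF C], of h] h
    by (simp add: o_def continuous_on_subset)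
  define K where "K = {y::ereal^'d. \<rho> \<le> norm (piC C y)}"
  have "closed K" unfolding K_def
    by (intro closed_Collect_le continuous_intros continuous_piC[OF C])
  then have "compact K" by (rule closed_imp_compact_E)
  moreover have "0 \<notin> K" using rho by (simp add: K_def piC_zero[OF C])
  moreover have "\<forall>x. x \<notin> K \<longrightarrow> ?g x = 0" using h0 by (auto simp: K_def)
  ultimately have "((\<lambda>u. (\<integral>\<omega>. ?g (ext_emb (inverse u *\<^sub>R Y \<omega>)) \<partial>M)
                / measure M {\<omega>\<in>space M. norm (Y \<omega>) > u}) \<longlongrightarrow> (\<integral>x. ?g x \<partial>\<nu>)) at_top"
    using RV cg unfolding regularly_varying_def by blast
  then show ?thesis by (simp add: piC_ext_emb q_def)
qed

lemma TFn:
  assumes C: "0 \<le> C" and h: "continuous_on UNIV h" and rho: "0 < \<rho>"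
    and h0: "\<And>x. norm x < \<rho> \<Longrightarrow> h x = 0"
  shows "(\<lambda>n. (\<integral>\<omega>. h (kap C (inverse (real n) *\<^sub>R Y \<omega>)) \<partial>M) / q (real n)) \<longlonglongrightarrow> (\<integral>y. h (piC C y) \<partial>\<nu>)"
  using filterlim_compose[OF TF[OF assms] filterlim_real_sequentially] by (simp add: o_def)

lemma Y_meas[measurable]: "Y \<in> borel_measurable M"
  using RV by (simp add: regularly_varying_def)

lemma q_nonneg: "0 \<le> q u" by (simp add: q_def)

lemma intM:
  fixes g :: "real^'d \<Rightarrow> real" and B :: real
  assumes [measurable]: "g \<in> borel_measurable borel" and B: "\<And>x. \<bar>g x\<bar> \<le> B"
  shows "integrable M (\<lambda>\<omega>. g (c *\<^sub>R Y \<omega>))"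
proof -
  interpret prob_space M by (rule PS)
  show ?thesis by (rule integrable_const_bound[where B=B]) (auto simp: B)
qed

lemma meas_nu_iff: 
  fixes g :: "ereal^'d \<Rightarrow> 'c::topological_space"
  shows "g \<in> borel_measurable \<nu> \<longleftrightarrow> g \<in> borel_measurable borel"
proof -
  have "(borel_measurable \<nu> :: (ereal^'d \<Rightarrow> 'c) set) = borel_measurable borel"
    by (rule measurable_cong_sets[OF sets_nu refl])
  then show ?thesis by simp
qed

lemma intnu:
  fixes g :: "ereal^'d \<Rightarrow> real"
  assumes g: "g \<in> borel_measurable borel" and r: "0 < r" and B: "\<And>y. \<bar>g y\<bar> \<le> indicator (Sr r) y"
  shows "integrable \<nu> g"
proof (rule Bochner_Integration.integrable_bound[where f="indicator (Sr r) :: ereal^'d \<Rightarrow> real"])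
  show "integrable \<nu> (indicator (Sr r) :: ereal^'d \<Rightarrow> real)"
    using Sr_sets[of r] Sr_fin[OF r] r by auto
  show "g \<in> borel_measurable \<nu>" using meas_nu_iff[THEN iffD2, OF g] .
  show "AE x in \<nu>. norm (g x) \<le> norm (indicator (Sr r) x :: real)"
    using B by (auto simp: indicator_def)
qed

end


lemma prod3_le: "0 \<le> (a::real) \<Longrightarrow> a \<le> 1 \<Longrightarrow> 0 \<le> b \<Longrightarrow> 0 \<le> c \<Longrightarrow> c \<le> 1 \<Longrightarrow> a * b * c \<le> b"
proof -
  assume h: "0 \<le> a" "a \<le> 1" "0 \<le> b" "0 \<le> c" "c \<le> 1"
  have "a * c \<le> 1" using h by (intro mult_le_one) auto
  then have "b * (a * c) \<le> b * 1" using h by (intro mult_left_mono) auto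
  then show ?thesis by (simp add: algebra_simps)
qed

lemma infdist_ge: "A \<noteq> {} \<Longrightarrow> (\<And>a. a \<in> A \<Longrightarrow> d \<le> dist x a) \<Longrightarrow> d \<le> infdist x A"
  by (simp add: infdist_notempty cINF_greatest)

locale Core = RVs M Y \<alpha> \<nu> for M :: "'a measure" and Y :: "'a \<Rightarrow> real^'d" and \<alpha> \<nu> +
  fixes W :: "(real^'d) set" and \<delta> :: real and \<psi>n :: "nat \<Rightarrow> real^'d \<Rightarrow> real" and \<psi> :: "real^'d \<Rightarrow> real"
  assumes W_borel[measurable]: "W \<in> sets borel" and \<delta>_pos: "0 < \<delta>" and W\<delta>: "\<And>x. x \<in> W \<Longrightarrow> \<delta> < norm x"
    and W_ne: "W \<noteq> {}" and front: "emeasure \<nu> (frontier (ext_emb ` W)) = 0"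
    and \<psi>n_nn: "\<And>n x. 0 \<le> \<psi>n n x" and \<psi>n_le: "\<And>n x. \<psi>n n x \<le> 1"
    and \<psi>n_cont: "\<And>n. continuous_on UNIV (\<psi>n n)"
    and \<psi>_nn: "\<And>x. 0 \<le> \<psi> x" and \<psi>_le: "\<And>x. \<psi> x \<le> 1" and \<psi>_cont: "continuous_on UNIV \<psi>"
    and unif: "\<And>r e. 0 < e \<Longrightarrow> eventually (\<lambda>n. \<forall>x. norm x \<le> r \<longrightarrow> \<bar>\<psi>n n x - \<psi> x\<bar> \<le> e) sequentially"
begin

definition V :: "(ereal^'d) set" where "V = ext_emb ` W"

definition L :: real where "L = (\<integral>y. indicator V y * \<psi> (rp y) \<partial>\<nu>)"

definition a :: "nat \<Rightarrow> real" where
  "a n = (\<integral>\<omega>. \<psi>n n (inverse (real n) *\<^sub>R Y \<omega>) * indicator W (inverse (real n) *\<^sub>R Y \<omega>) \<partial>M) / q (real n)"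

lemma \<psi>n_meas[measurable]: "\<psi>n n \<in> borel_measurable borel"
  by (rule borel_measurable_continuous_onI[OF \<psi>n_cont])
lemma \<psi>_meas[measurable]: "\<psi> \<in> borel_measurable borel"
  by (rule borel_measurable_continuous_onI[OF \<psi>_cont])

lemma V_meas[measurable]: "V \<in> sets borel"
  unfolding V_def by (rule sets_ext_emb_image[OF W_borel])

lemma closure_W: "x \<in> closure W \<Longrightarrow> \<delta> \<le> norm x"
proof -
  assume "x \<in> closure W"
  moreover have "closure W \<subseteq> {x. \<delta> \<le> norm x}"
    by (intro closure_minimal) (auto intro: closed_Collect_le continuous_intros less_imp_le W\<delta>)
  ultimately show ?thesis by auto
qed

lemma closure_W_ne: "closure W \<noteq> {}" using W_ne by simp

lemma V_Sr: "V \<subseteq> Sr (\<delta> / real CARD('d))"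
proof
  fix y assume "y \<in> V"
  then obtain x where "x \<in> W" "y = ext_emb x" by (auto simp: V_def)
  then show "y \<in> Sr (\<delta> / real CARD('d))" using W\<delta> ext_emb_big_Sr[of \<delta> x] by force
qed

lemma frontier_V_Sr: "frontier V \<subseteq> Sr (\<delta> / real CARD('d))"
proof -
  have "closure V \<subseteq> Sr (\<delta> / real CARD('d))"
    using V_Sr closed_Sr[of "\<delta> / real CARD('d)"] \<delta>_pos by (intro closure_minimal) auto
  then show ?thesis by (auto simp: frontier_def)
qed

lemma frontier_V_meas[measurable]: "frontier V \<in> sets borel"
  by (simp add: borel_closed)

lemma measure_frontier_V: "measure \<nu> (frontier V) = 0"
  using front by (simp add: V_def measure_def)

lemma rho_pos: "0 < \<delta> / real CARD('d)" "0 < (\<delta>/2) / real CARD('d)"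
  using \<delta>_pos by auto

lemma frontier_W_V: "x \<in> closure W \<Longrightarrow> x \<notin> interior W \<Longrightarrow> ext_emb x \<in> frontier V"
  unfolding V_def by (rule frontier_ext_emb) (simp add: frontier_def)

lemma PW_upper:
  assumes R: "0 \<le> R" and k: "0 \<le> k" and eta: "\<forall>x. norm x \<le> R + 2 \<longrightarrow> \<bar>\<psi>n n x - \<psi> x\<bar> \<le> \<eta>"
  shows "\<psi>n n x * indicator W x \<le> \<psi> x * uf k (closure W) x * cutf R x + \<eta> * jf \<delta> (kap (\<delta>/2) x) + tailf R (kap (R+1) x)"
proof -
  have hU: "0 \<le> \<psi> x * uf k (closure W) x * cutf R x"
    using \<psi>_nn uf_bounds[OF k] cutf_bounds by (intro mult_nonneg_nonneg) auto
  have "\<bar>\<psi>n n 0 - \<psi> 0\<bar> \<le> \<eta>" using eta R by simp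
  then have eta0: "0 \<le> \<eta>" by (meson abs_ge_zero order_trans)
  have j0: "0 \<le> \<eta> * jf \<delta> (kap (\<delta>/2) x)" using eta0 jf_bounds by (intro mult_nonneg_nonneg) auto
  have t0: "0 \<le> tailf R (kap (R+1) x)" by (rule tailf_bounds(1))
  show ?thesis
  proof (cases "x \<in> W")
    case False then show ?thesis using hU j0 t0 by simp
  next
    case xW: True
    show ?thesis
    proof (cases "R + 1 < norm x")
      case True
      then have "tailf R (kap (R+1) x) = 1" by (rule tailf_kap_one[OF R])
      then show ?thesis using xW hU j0 \<psi>n_le[of n x] by simp
    next
      case False
      have u1: "uf k (closure W) x = 1"
        using xW in_closure_iff_infdist_zero[OF W_ne, of x] by (simp add: uf_def)
      have c1: "cutf R x = 1" using False by (simp add: cutf_def)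
      have j1: "jf \<delta> (kap (\<delta>/2) x) = 1"
        using jf_kap_one[OF \<delta>_pos, of x] W\<delta>[OF xW] \<delta>_pos by simp
      have "norm x \<le> R + 2" using False by simp
      then have "\<bar>\<psi>n n x - \<psi> x\<bar> \<le> \<eta>" using eta by blast
      then have "\<psi>n n x \<le> \<psi> x + \<eta>" by linarith
      then show ?thesis using xW u1 c1 j1 t0 by simp
    qed
  qed
qed

definition D :: "nat \<Rightarrow> ereal^'d \<Rightarrow> real" where
  "D k y = indicator (Sr ((\<delta>/2) / real CARD('d))) y * indicator (- closure W) (rp y) * uf (real k) (closure W) (rp y)"

lemma uf_small: "1 \<le> k * (\<delta>/2) \<Longrightarrow> norm x < \<delta>/2 \<Longrightarrow> uf k (closure W) x = 0"
proof -
  assume k: "1 \<le> k * (\<delta>/2)" and x: "norm x < \<delta>/2"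
  have "\<delta>/2 \<le> infdist x (closure W)"
  proof (rule infdist_ge[OF closure_W_ne])
    fix z assume "z \<in> closure W"
    then have "\<delta> \<le> norm z" by (rule closure_W)
    then show "\<delta>/2 \<le> dist x z" using x norm_triangle_ineq2[of z x] by (simp add: dist_norm norm_minus_commute)
  qed
  have k0: "0 \<le> k"
  proof (rule ccontr)
    assume "\<not> 0 \<le> k" then have "k * (\<delta>/2) < 0" using \<delta>_pos by (simp add: mult_neg_pos)
    then show False using k by simp
  qed
  then have "k * (\<delta>/2) \<le> k * infdist x (closure W)"
    using \<open>\<delta>/2 \<le> infdist x (closure W)\<close> by (intro mult_left_mono) auto
  then show ?thesis using k by (simp add: uf_def)
qed

lemma PW_LU:
  assumes R: "0 \<le> R" and k: "1 \<le> real k * (\<delta>/2)"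
  shows "\<psi> (piC (R+2) y) * uf (real k) (closure W) (piC (R+2) y) * cutf R (piC (R+2) y)
    \<le> indicator V y * \<psi> (rp y) + indicator (frontier V) y + D k y"
proof -
  let ?h = "\<lambda>x. \<psi> x * uf (real k) (closure W) x * cutf R x"
  have k0: "0 \<le> real k" by simp
  have hnn: "0 \<le> ?h x" for x using \<psi>_nn uf_bounds[OF k0] cutf_bounds by (intro mult_nonneg_nonneg) auto
  have hle: "?h x \<le> uf (real k) (closure W) x" for x
    using \<psi>_le[of x] \<psi>_nn[of x] uf_bounds[OF k0, of "closure W" x] cutf_bounds[of R x]
    by (intro prod3_le) auto
  have hle1: "?h x \<le> 1" for x using hle[of x] uf_bounds[OF k0] by (meson order_trans)
  have Dnn: "0 \<le> D k y" using uf_bounds[OF k0] unfolding D_def by (intro mult_nonneg_nonneg) auto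
  have rhs0: "0 \<le> indicator V y * \<psi> (rp y) + indicator (frontier V) y + D k y"
    using Dnn \<psi>_nn by simp
  show ?thesis
  proof (cases "\<exists>i. \<bar>y $ i\<bar> = \<infinity>")
    case True
    then obtain i where "\<bar>y $ i\<bar> = (\<infinity>::ereal)" by (elim exE) 
    then have "R + 2 \<le> norm (piC (R+2) y)" using piC_inf[of "R+2" y i] R by simp
    then have "cutf R (piC (R+2) y) = 0" by (simp add: cutf_def)
    then show ?thesis using rhs0 by simp
  next
    case False
    define x where "x = rp y"
    have y: "y = ext_emb x"
      using False by (auto simp: x_def vec_eq_iff ext_emb_def rp_def ereal_real)
    have hk: "?h (kap (R+2) x) = ?h x"
      by (rule kap_inv) (use R in \<open>auto simp: cutf_def\<close>)
    have pk: "piC (R+2) y = kap (R+2) x" by (simp add: y piC_ext_emb)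
    show ?thesis
    proof (cases "x \<in> W")
      case True
      then have "y \<in> V" by (simp add: V_def y)
      moreover have "?h x \<le> \<psi> x"
        using \<psi>_nn[of x] uf_bounds[OF k0, of "closure W" x] cutf_bounds[of R x]
        by (simp add: mult_le_one mult_left_le mult_nonneg_nonneg mult.assoc)
      ultimately have e1: "indicator V y * \<psi> (rp y) = \<psi> x" "?h x \<le> \<psi> x" by (simp_all add: x_def)
      have e2: "?h (piC (R+2) y) = ?h x" using pk hk by simp
      have i0: "0 \<le> (indicator (frontier V) y :: real)" by simp
      show ?thesis using e1 e2 i0 Dnn by linarith
    next
      case xW: False
      show ?thesis
      proof (cases "x \<in> closure W")
        case True
        then have "y \<in> frontier V" using frontier_W_V[of x] xW interior_subset[of W] y by blast
        have e2: "?h (piC (R+2) y) = ?h x" using pk hk by simp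
        have i0: "0 \<le> indicator V y * \<psi> (rp y)" using \<psi>_nn by simp
        have i1: "indicator (frontier V) y = (1::real)" using \<open>y \<in> frontier V\<close> by simp
        show ?thesis using e2 i0 i1 hle1[of x] Dnn by linarith
      next
        case False
        show ?thesis
        proof (cases "norm x < \<delta>/2")
          case True
          then have "?h x = 0" using uf_small[OF k] by simp
          then have "?h (piC (R+2) y) = 0" using pk hk by simp
          then show ?thesis using rhs0 by linarith
        next
          case big: False
          then have "y \<in> Sr ((\<delta>/2) / real CARD('d))" using ext_emb_big_Sr[of "\<delta>/2" x] y by simp
          then have "D k y = uf (real k) (closure W) x" using False by (simp add: D_def x_def)
          moreover have "?h (piC (R+2) y) = ?h x" using pk hk by simp
          moreover have "0 \<le> indicator V y * \<psi> (rp y)" using \<psi>_nn by simp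
          moreover have "0 \<le> (indicator (frontier V) y :: real)" by simp
          ultimately show ?thesis using hle[of x] by linarith
        qed
      qed
    qed
  qed
qed



lemma D_meas[measurable]: "D k \<in> borel_measurable borel"
proof -
  have [measurable]: "uf (real k) (closure W) \<in> borel_measurable borel"
    by (rule borel_measurable_continuous_onI[OF cont_uf])
  have [measurable]: "(Sr ((\<delta>/2) / real CARD('d)) :: (ereal^'d) set) \<in> sets borel"
    using Sr_sets[of "(\<delta>/2) / real CARD('d)"] \<delta>_pos sets_nu by simp
  have [measurable]: "- closure W \<in> sets borel" by (simp add: borel_open)
  show ?thesis unfolding D_def by measurable
qed

lemma D_lim: "(\<lambda>k. \<integral>y. D k y \<partial>\<nu>) \<longlonglongrightarrow> 0"
proof -
  let ?r = "(\<delta>/2) / real CARD('d)"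
  have "(\<lambda>k. \<integral>y. D k y \<partial>\<nu>) \<longlonglongrightarrow> (\<integral>y. 0 \<partial>\<nu>)"
  proof (rule integral_dominated_convergence[where w="indicator (Sr ?r)"])
    show "(\<lambda>y. 0::real) \<in> borel_measurable \<nu>" by simp
    show "D k \<in> borel_measurable \<nu>" for k using meas_nu_iff[THEN iffD2, OF D_meas] .
    show "integrable \<nu> (indicator (Sr ?r) :: ereal^'d \<Rightarrow> real)"
      using Sr_sets[of ?r] Sr_fin[of ?r] rho_pos by auto
    show "AE y in \<nu>. (\<lambda>k. D k y) \<longlonglongrightarrow> 0"
    proof (rule AE_I2)
      fix y
      show "(\<lambda>k. D k y) \<longlonglongrightarrow> 0"
      proof (cases "rp y \<in> closure W")
        case True then show ?thesis by (simp add: D_def)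
      next
        case False
        then have pos: "0 < infdist (rp y) (closure W)"
          using infdist_pos_not_in_closed[of "closure W" "rp y"] closure_W_ne by simp
        have "eventually (\<lambda>k. D k y = 0) sequentially"
          using eventually_mult_ge1[OF pos] by eventually_elim (simp add: D_def uf_def)
        then show ?thesis by (rule tendsto_eventually)
      qed
    qed
    show "AE y in \<nu>. norm (D k y) \<le> indicator (Sr ?r) y" for k
    proof (rule AE_I2)
      fix y
      have "0 \<le> uf (real k) (closure W) (rp y)" "uf (real k) (closure W) (rp y) \<le> 1"
        using uf_bounds[of "real k"] by auto
      then show "norm (D k y) \<le> indicator (Sr ?r) y"
        by (auto simp: D_def indicator_def)
    qed
  qed
  then show ?thesis by simp
qed


lemma ind_Sr_le: "r \<le> r' \<Longrightarrow> 0 \<le> r \<Longrightarrow> (indicator (Sr r') y :: real) \<le> indicator (Sr r) y"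
  using Sr_mono[of r r'] by (auto simp: indicator_def)

lemma Sr_half: "(Sr (\<delta> / real CARD('d)) :: (ereal^'d) set) \<subseteq> Sr ((\<delta>/2) / real CARD('d))"
  by (rule Sr_mono) (use \<delta>_pos in \<open>simp add: divide_right_mono frac_le\<close>)

lemma V_Sr2: "V \<subseteq> Sr ((\<delta>/2) / real CARD('d))" using V_Sr Sr_half by blast
lemma fV_Sr2: "frontier V \<subseteq> Sr ((\<delta>/2) / real CARD('d))" using frontier_V_Sr Sr_half by blast

lemma int_V: "integrable \<nu> (\<lambda>y. indicator V y * \<psi> (rp y))"
proof (rule intnu[OF _ rho_pos(2)])
  fix y
  show "\<bar>indicator V y * \<psi> (rp y)\<bar> \<le> indicator (Sr ((\<delta>/2) / real CARD('d))) y"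
    using V_Sr2 \<psi>_nn[of "rp y"] \<psi>_le[of "rp y"] by (auto simp: indicator_def)
qed simp

lemma int_fV: "integrable \<nu> (indicator (frontier V) :: _ \<Rightarrow> real)"
proof (rule intnu[OF _ rho_pos(2)])
  fix y
  show "\<bar>indicator (frontier V) y :: real\<bar> \<le> indicator (Sr ((\<delta>/2) / real CARD('d))) y"
    using fV_Sr2 by (auto simp: indicator_def)
qed simp

lemma uf_abs: "0 \<le> k \<Longrightarrow> \<bar>uf k F x\<bar> \<le> 1"
  using uf_bounds[of k F x] by auto

lemma int_D: "integrable \<nu> (D k)"
proof (rule intnu[OF D_meas rho_pos(2)])
  fix y
  show "\<bar>D k y\<bar> \<le> indicator (Sr ((\<delta>/2) / real CARD('d))) y"
    using uf_abs[of "real k" "closure W" "rp y"] by (auto simp: D_def indicator_def)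
qed

lemma R_choice:
  assumes e: "0 < e"
  obtains R where "1 \<le> R" "measure \<nu> (Sr (R / real CARD('d))) < e"
proof -
  have "eventually (\<lambda>r. measure \<nu> (Sr r :: (ereal^'d) set) < e) at_top"
    using order_tendstoD(2)[OF Sr_tendsto e] .
  then obtain r0 where r0: "\<And>r. r0 \<le> r \<Longrightarrow> measure \<nu> (Sr r :: (ereal^'d) set) < e"
    by (auto simp: eventually_at_top_linorder)
  define R where "R = max 1 (r0 * real CARD('d))"
  have "r0 \<le> R / real CARD('d)" by (simp add: R_def field_simps)
  then show ?thesis using r0 that[of R] by (simp add: R_def)
qed

lemma tail_lim:
  assumes R: "1 \<le> R"
  shows "(\<lambda>n. (\<integral>\<omega>. tailf R (kap (R+1) (inverse (real n) *\<^sub>R Y \<omega>)) \<partial>M) / q (real n))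
          \<longlonglongrightarrow> (\<integral>y. tailf R (piC (R+1) y) \<partial>\<nu>)"
    and "(\<integral>y. tailf R (piC (R+1) y) \<partial>\<nu>) \<le> measure \<nu> (Sr (R / real CARD('d)))"
proof -
  show "(\<lambda>n. (\<integral>\<omega>. tailf R (kap (R+1) (inverse (real n) *\<^sub>R Y \<omega>)) \<partial>M) / q (real n))
          \<longlonglongrightarrow> (\<integral>y. tailf R (piC (R+1) y) \<partial>\<nu>)"
    by (rule TFn[of "R+1" "tailf R" R, OF _ cont_tailf]) (use R in \<open>auto simp: tailf_def\<close>)
  have b: "tailf R (piC (R+1) y) \<le> indicator (Sr (R / real CARD('d))) y" for y :: "ereal^'d"
  proof (cases "R \<le> norm (piC (R+1) y)")
    case True then show ?thesis using piC_big_Sr[of "R+1" R y] R tailf_bounds by auto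
  next
    case False then show ?thesis by (simp add: tailf_def)
  qed
  have rpos: "0 < R / real CARD('d)" using R by simp
  have mt[measurable]: "(\<lambda>y::ereal^'d. tailf R (piC (R+1) y)) \<in> borel_measurable borel"
    using R by (intro borel_measurable_continuous_onI continuous_on_compose2[OF cont_tailf continuous_piC]) auto
  have "(\<integral>y. tailf R (piC (R+1) y) \<partial>\<nu>) \<le> (\<integral>y. indicator (Sr (R / real CARD('d))) y \<partial>\<nu>)"
  proof (rule integral_mono)
    show "integrable \<nu> (\<lambda>y. tailf R (piC (R+1) y))"
    proof (rule intnu[OF mt rpos])
      fix y :: "ereal^'d"
      have "0 \<le> tailf R (piC (R+1) y)" by (rule tailf_bounds(1))
      then show "\<bar>tailf R (piC (R+1) y)\<bar> \<le> indicator (Sr (R / real CARD('d))) y" using b[of y] by simp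
    qed
    show "integrable \<nu> (indicator (Sr (R / real CARD('d))) :: _ \<Rightarrow> real)"
      using Sr_sets[of "R / real CARD('d)"] Sr_fin[OF rpos] rpos by auto
  qed (rule b)
  also have "\<dots> = measure \<nu> (Sr (R / real CARD('d)))"
    using Sr_sets[of "R / real CARD('d)"] rpos by simp
  finally show "(\<integral>y. tailf R (piC (R+1) y) \<partial>\<nu>) \<le> measure \<nu> (Sr (R / real CARD('d)))" .
qed

lemma j_lim:
  "(\<lambda>n. (\<integral>\<omega>. jf \<delta> (kap (\<delta>/2) (inverse (real n) *\<^sub>R Y \<omega>)) \<partial>M) / q (real n))
          \<longlonglongrightarrow> (\<integral>y. jf \<delta> (piC (\<delta>/2) y) \<partial>\<nu>)"
proof (rule TFn[of "\<delta>/2" "jf \<delta>" "\<delta>/4"])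
  fix x :: "real^'d" assume "norm x < \<delta>/4"
  then have "4 / \<delta> * norm x < 4 / \<delta> * (\<delta>/4)" using \<delta>_pos by (intro mult_strict_left_mono) auto
  then show "jf \<delta> x = 0" using \<delta>_pos by (simp add: jf_def)
qed (use \<delta>_pos cont_jf in auto)

lemma J_nonneg: "0 \<le> (\<integral>y. jf \<delta> (piC (\<delta>/2) y) \<partial>\<nu>)"
  by (rule integral_nonneg_AE) (simp add: jf_bounds)


lemma obtain_k:
  assumes e: "0 < e"
  obtains k where "1 \<le> real k * (\<delta>/2)" "(\<integral>y. D k y \<partial>\<nu>) < e"
proof -
  have "eventually (\<lambda>k. 1 \<le> real k * (\<delta>/2) \<and> (\<integral>y. D k y \<partial>\<nu>) < e) sequentially"
    using eventually_mult_ge1[of "\<delta>/2"] \<delta>_pos order_tendstoD(2)[OF D_lim e] by (auto intro: eventually_conj)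
  then obtain k where "1 \<le> real k * (\<delta>/2) \<and> (\<integral>y. D k y \<partial>\<nu>) < e"
    by (auto simp: eventually_sequentially)
  then show ?thesis using that by blast
qed

lemma hU_props:
  assumes R: "1 \<le> R" and k: "1 \<le> real k * (\<delta>/2)"
  defines "h \<equiv> \<lambda>x. \<psi> x * uf (real k) (closure W) x * cutf R x"
  shows "continuous_on UNIV h" "\<And>x. norm x < \<delta>/2 \<Longrightarrow> h x = 0" "\<And>x. h (kap (R+2) x) = h x"
    "\<And>x. 0 \<le> h x" "\<And>x. h x \<le> 1"
proof -
  show "continuous_on UNIV h" unfolding h_def by (intro continuous_intros \<psi>_cont cont_uf cont_cutf)
  show "h x = 0" if "norm x < \<delta>/2" for x using uf_small[OF k that] by (simp add: h_def)
  show "h (kap (R+2) x) = h x" for x by (rule kap_inv) (use R in \<open>auto simp: cutf_def h_def\<close>)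
  show "0 \<le> h x" for x unfolding h_def using \<psi>_nn uf_bounds[of "real k"] cutf_bounds
    by (intro mult_nonneg_nonneg) auto
  show "h x \<le> 1" for x
  proof -
    have "h x \<le> uf (real k) (closure W) x" unfolding h_def
      using \<psi>_nn[of x] \<psi>_le[of x] uf_bounds[of "real k" "closure W" x] cutf_bounds[of R x]
      by (intro prod3_le) auto
    then show ?thesis using uf_bounds[of "real k" "closure W" x] by linarith
  qed
qed

lemma upper:
  assumes eps: "0 < \<epsilon>"
  shows "eventually (\<lambda>n. a n \<le> L + \<epsilon>) sequentially"
proof -
  define e where "e = \<epsilon> / 4"
  have e: "0 < e" using eps by (simp add: e_def)
  obtain R where R: "1 \<le> R" "measure \<nu> (Sr (R / real CARD('d))) < e" using R_choice[OF e] by blast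
  define J where "J = (\<integral>y. jf \<delta> (piC (\<delta>/2) y) \<partial>\<nu>)"
  have J0: "0 \<le> J" using J_nonneg by (simp add: J_def)
  define \<eta> where "\<eta> = e / (J + 1)"
  have eta: "0 < \<eta>" using e J0 by (simp add: \<eta>_def)
  have etaJ: "\<eta> * J \<le> e"
  proof -
    have "\<eta> * J = e * (J / (J + 1))" by (simp add: \<eta>_def)
    also have "\<dots> \<le> e * 1" using e J0 by (intro mult_left_mono) auto
    finally show ?thesis by simp
  qed
  obtain k where k: "1 \<le> real k * (\<delta>/2)" "(\<integral>y. D k y \<partial>\<nu>) < e" using obtain_k[OF e] by blast
  define h where "h = (\<lambda>x. \<psi> x * uf (real k) (closure W) x * cutf R x)"
  note hp = hU_props[OF R(1) k(1), folded h_def]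
  define LU where "LU = (\<integral>y. h (piC (R+2) y) \<partial>\<nu>)"
  have hm[measurable]: "(\<lambda>y::ereal^'d. h (piC (R+2) y)) \<in> borel_measurable borel"
    using R by (intro borel_measurable_continuous_onI continuous_on_compose2[OF hp(1) continuous_piC]) auto
  have LU: "LU \<le> L + (\<integral>y. D k y \<partial>\<nu>)"
  proof -
    have "LU \<le> (\<integral>y. indicator V y * \<psi> (rp y) + indicator (frontier V) y + D k y \<partial>\<nu>)"
      unfolding LU_def
    proof (rule integral_mono)
      show "integrable \<nu> (\<lambda>y. h (piC (R+2) y))"
      proof (rule intnu[OF hm rho_pos(2)])
        fix y :: "ereal^'d"
        show "\<bar>h (piC (R+2) y)\<bar> \<le> indicator (Sr ((\<delta>/2) / real CARD('d))) y"
        proof (cases "\<delta>/2 \<le> norm (piC (R+2) y)")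
          case True
          then have "y \<in> Sr ((\<delta>/2) / real CARD('d))" using piC_big_Sr[of "R+2" "\<delta>/2" y] R by simp
          then show ?thesis using hp(4,5)[of "piC (R+2) y"] by (simp add: h_def)
        next
          case False
          then have "norm (piC (R+2) y) < \<delta>/2" by simp
          then have "h (piC (R+2) y) = 0" using hp(2) by (simp add: h_def)
          then show ?thesis by simp
        qed
      qed
      show "integrable \<nu> (\<lambda>y. indicator V y * \<psi> (rp y) + indicator (frontier V) y + D k y)"
        using int_V int_fV int_D by auto
      show "h (piC (R+2) y) \<le> indicator V y * \<psi> (rp y) + indicator (frontier V) y + D k y" for y
        unfolding h_def by (rule PW_LU) (use R k in auto)
    qed
    also have "\<dots> = L + measure \<nu> (frontier V) + (\<integral>y. D k y \<partial>\<nu>)"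
      using int_V int_fV int_D by (simp add: L_def)
    finally show ?thesis using measure_frontier_V by simp
  qed
  define TT where "TT = (\<integral>y. tailf R (piC (R+1) y) \<partial>\<nu>)"
  have TT: "TT \<le> measure \<nu> (Sr (R / real CARD('d)))" using tail_lim(2)[OF R(1)] by (simp add: TT_def)
  let ?Yn = "\<lambda>n \<omega>. inverse (real n) *\<^sub>R Y \<omega>"
  define A where "A n = (\<integral>\<omega>. h (kap (R+2) (?Yn n \<omega>)) \<partial>M) / q (real n)" for n
  define B where "B n = (\<integral>\<omega>. jf \<delta> (kap (\<delta>/2) (?Yn n \<omega>)) \<partial>M) / q (real n)" for n
  define T where "T n = (\<integral>\<omega>. tailf R (kap (R+1) (?Yn n \<omega>)) \<partial>M) / q (real n)" for n
  have Alim: "A \<longlonglongrightarrow> LU" unfolding A_def LU_def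
  proof (rule TFn[of "R+2" h "\<delta>/2", OF _ hp(1)])
    show "h x = 0" if "norm x < \<delta>/2" for x using hp(2)[OF that] by (simp add: h_def)
  qed (use R \<delta>_pos in auto)
  have Blim: "B \<longlonglongrightarrow> J" unfolding B_def J_def by (rule j_lim)
  have Tlim: "T \<longlonglongrightarrow> TT" unfolding T_def TT_def by (rule tail_lim(1)[OF R(1)])
  have "(\<lambda>n. A n + \<eta> * B n + T n) \<longlonglongrightarrow> LU + \<eta> * J + TT"
    by (intro tendsto_intros Alim Blim Tlim)
  moreover have "LU + \<eta> * J + TT < L + \<epsilon>"
    using LU k(2) etaJ TT R(2) eps unfolding e_def by linarith
  ultimately have ev1: "eventually (\<lambda>n. A n + \<eta> * B n + T n < L + \<epsilon>) sequentially"
    by (rule order_tendstoD(2))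
  have ev2: "eventually (\<lambda>n. \<forall>x. norm x \<le> R + 2 \<longrightarrow> \<bar>\<psi>n n x - \<psi> x\<bar> \<le> \<eta>) sequentially"
    by (rule unif[OF eta])
  show ?thesis
    using ev1 ev2
  proof eventually_elim
    case (elim n)
    have pw: "\<psi>n n (?Yn n \<omega>) * indicator W (?Yn n \<omega>) \<le>
        h (kap (R+2) (?Yn n \<omega>)) + \<eta> * jf \<delta> (kap (\<delta>/2) (?Yn n \<omega>)) + tailf R (kap (R+1) (?Yn n \<omega>))" for \<omega>
      using PW_upper[of R "real k" n \<eta> "?Yn n \<omega>"] elim(2) R hp(3) by (simp add: h_def)
    have [measurable]: "h \<in> borel_measurable borel" by (rule borel_measurable_continuous_onI[OF hp(1)])
    have [measurable]: "jf \<delta> \<in> borel_measurable borel" by (rule borel_measurable_continuous_onI[OF cont_jf])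
    have [measurable]: "tailf R \<in> borel_measurable borel" by (rule borel_measurable_continuous_onI[OF cont_tailf])
    have [measurable]: "kap C \<in> borel_measurable borel" for C :: real
      unfolding kap_def by (subst borel_measurable_euclidean_space) (auto simp: Basis_vec_def inner_axis)
    have i1: "integrable M (\<lambda>\<omega>. h (kap (R+2) (?Yn n \<omega>)))"
    proof (rule intM[where B=1])
      show "(\<lambda>x. h (kap (R+2) x)) \<in> borel_measurable borel" by measurable
      show "\<bar>h (kap (R+2) x)\<bar> \<le> 1" for x using hp(4,5)[of "kap (R+2) x"] by (simp add: h_def)
    qed
    have i2: "integrable M (\<lambda>\<omega>. jf \<delta> (kap (\<delta>/2) (?Yn n \<omega>)))"
      by (rule intM[where B=1]) (auto intro: jf_abs)
    have i3: "integrable M (\<lambda>\<omega>. tailf R (kap (R+1) (?Yn n \<omega>)))"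
      by (rule intM[where B=1]) (auto intro: tailf_abs)
    have i0: "integrable M (\<lambda>\<omega>. \<psi>n n (?Yn n \<omega>) * indicator W (?Yn n \<omega>))"
      by (rule intM[where B=1]) (use \<psi>n_nn \<psi>n_le in \<open>auto simp: abs_le_iff indicator_def\<close>)
    have "(\<integral>\<omega>. \<psi>n n (?Yn n \<omega>) * indicator W (?Yn n \<omega>) \<partial>M) \<le>
        (\<integral>\<omega>. h (kap (R+2) (?Yn n \<omega>)) + \<eta> * jf \<delta> (kap (\<delta>/2) (?Yn n \<omega>)) + tailf R (kap (R+1) (?Yn n \<omega>)) \<partial>M)"
      by (rule integral_mono[OF i0 _ pw]) (use i1 i2 i3 in auto)
    also have "\<dots> = (\<integral>\<omega>. h (kap (R+2) (?Yn n \<omega>)) \<partial>M) + \<eta> * (\<integral>\<omega>. jf \<delta> (kap (\<delta>/2) (?Yn n \<omega>)) \<partial>M)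
        + (\<integral>\<omega>. tailf R (kap (R+1) (?Yn n \<omega>)) \<partial>M)"
      using i1 i2 i3 by simp
    finally have "a n \<le> (\<dots>) / q (real n)"
      unfolding a_def by (rule divide_right_mono) (rule q_nonneg)
    also have "\<dots> = A n + \<eta> * B n + T n"
      by (simp add: A_def B_def T_def add_divide_distrib)
    finally show ?case using elim(1) by simp
  qed
qed


lemma negW_ne: "- W \<noteq> {}"
proof -
  have "0 \<notin> W" using W\<delta>[of 0] \<delta>_pos by auto
  then show ?thesis by auto
qed

lemma lf_pos_in_W: "0 < lf k (- W) x \<Longrightarrow> x \<in> W"
proof (rule ccontr)
  assume "0 < lf k (- W) x" "x \<notin> W"
  then have "x \<in> closure (- W)" using closure_subset[of "- W"] by auto
  then have "infdist x (- W) = 0" using in_closure_iff_infdist_zero[OF negW_ne] by simp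
  then show False using \<open>0 < lf k (- W) x\<close> by (simp add: lf_def)
qed

lemma PW_lower:
  assumes R: "0 \<le> R" and k: "0 \<le> k" and eta: "\<forall>x. norm x \<le> R + 2 \<longrightarrow> \<bar>\<psi>n n x - \<psi> x\<bar> \<le> \<eta>"
  shows "\<psi> x * lf k (- W) x * cutf R x - \<eta> * jf \<delta> (kap (\<delta>/2) x) \<le> \<psi>n n x * indicator W x"
proof -
  have "\<bar>\<psi>n n 0 - \<psi> 0\<bar> \<le> \<eta>" using eta R by simp
  then have eta0: "0 \<le> \<eta>" by (meson abs_ge_zero order_trans)
  have j0: "0 \<le> \<eta> * jf \<delta> (kap (\<delta>/2) x)" using eta0 jf_bounds by (intro mult_nonneg_nonneg) auto
  have r0: "0 \<le> \<psi>n n x * indicator W x" using \<psi>n_nn[of n x] by simp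
  show ?thesis
  proof (cases "lf k (- W) x = 0 \<or> cutf R x = 0")
    case True then show ?thesis using j0 r0 by auto
  next
    case False
    then have "0 < lf k (- W) x" "0 < cutf R x" using lf_bounds[OF k, of "- W" x] cutf_bounds[of R x] by auto
    then have xW: "x \<in> W" and nx: "norm x < R + 2" using lf_pos_in_W by (auto simp: cutf_def)
    have j1: "jf \<delta> (kap (\<delta>/2) x) = 1"
      using jf_kap_one[OF \<delta>_pos, of x] W\<delta>[OF xW] \<delta>_pos by simp
    have "\<bar>\<psi>n n x - \<psi> x\<bar> \<le> \<eta>" using eta nx by simp
    then have "\<psi> x - \<eta> \<le> \<psi>n n x" by linarith
    moreover have "\<psi> x * lf k (- W) x * cutf R x \<le> \<psi> x"
    proof -
      have "lf k (- W) x * cutf R x \<le> 1" using lf_bounds[OF k, of "- W" x] cutf_bounds[of R x]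
        by (intro mult_le_one) auto
      then have "\<psi> x * (lf k (- W) x * cutf R x) \<le> \<psi> x * 1" using \<psi>_nn[of x] by (intro mult_left_mono) auto
      then show ?thesis by (simp add: mult.assoc)
    qed
    ultimately show ?thesis using xW j1 by simp
  qed
qed

definition D' :: "nat \<Rightarrow> ereal^'d \<Rightarrow> real" where
  "D' k y = indicator V y * indicator (interior W) (rp y) * (1 - lf (real k) (- W) (rp y))"

lemma D'_meas[measurable]: "D' k \<in> borel_measurable borel"
proof -
  have [measurable]: "lf (real k) (- W) \<in> borel_measurable borel"
    by (rule borel_measurable_continuous_onI[OF cont_lf])
  have [measurable]: "interior W \<in> sets borel" by (simp add: borel_open)
  show ?thesis unfolding D'_def by measurable
qed

lemma D'_bounds: "0 \<le> D' k y" "D' k y \<le> indicator V y"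
  using lf_bounds[of "real k" "- W" "rp y"] by (auto simp: D'_def indicator_def)

lemma D'_Sr: "\<bar>D' k y\<bar> \<le> indicator (Sr ((\<delta>/2) / real CARD('d))) y"
proof (cases "y \<in> V")
  case True
  then have "y \<in> Sr ((\<delta>/2) / real CARD('d))" using V_Sr2 by blast
  then show ?thesis using D'_bounds[of k y] True by simp
next
  case False
  then show ?thesis using D'_bounds[of k y] by simp
qed

lemma int_D': "integrable \<nu> (D' k)"
  by (rule intnu[OF D'_meas rho_pos(2) D'_Sr])

lemma D'_lim: "(\<lambda>k. \<integral>y. D' k y \<partial>\<nu>) \<longlonglongrightarrow> 0"
proof -
  let ?r = "(\<delta>/2) / real CARD('d)"
  have "(\<lambda>k. \<integral>y. D' k y \<partial>\<nu>) \<longlonglongrightarrow> (\<integral>y. 0 \<partial>\<nu>)"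
  proof (rule integral_dominated_convergence[where w="indicator (Sr ?r)"])
    show "(\<lambda>y. 0::real) \<in> borel_measurable \<nu>" by simp
    show "D' k \<in> borel_measurable \<nu>" for k using meas_nu_iff[THEN iffD2, OF D'_meas] .
    show "integrable \<nu> (indicator (Sr ?r) :: ereal^'d \<Rightarrow> real)"
      using Sr_sets[of ?r] Sr_fin[of ?r] rho_pos by auto
    show "AE y in \<nu>. (\<lambda>k. D' k y) \<longlonglongrightarrow> 0"
    proof (rule AE_I2)
      fix y
      show "(\<lambda>k. D' k y) \<longlonglongrightarrow> 0"
      proof (cases "rp y \<in> interior W")
        case False then show ?thesis by (simp add: D'_def)
      next
        case True
        then have "rp y \<notin> closure (- W)" by (simp add: closure_complement)
        then have pos: "0 < infdist (rp y) (- W)"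
          using in_closure_iff_infdist_zero[OF negW_ne, of "rp y"] infdist_nonneg[of "rp y" "- W"] by simp
        have "eventually (\<lambda>k. D' k y = 0) sequentially"
          using eventually_mult_ge1[OF pos] by eventually_elim (simp add: D'_def lf_def)
        then show ?thesis by (rule tendsto_eventually)
      qed
    qed
    show "AE y in \<nu>. norm (D' k y) \<le> indicator (Sr ?r) y" for k
    proof (rule AE_I2)
      fix y
      show "norm (D' k y) \<le> indicator (Sr ?r) y"
        using D'_Sr[of k y] by simp
    qed
  qed
  then show ?thesis by simp
qed

lemma obtain_k':
  assumes e: "0 < e"
  obtains k where "(\<integral>y. D' k y \<partial>\<nu>) < e"
proof -
  have "eventually (\<lambda>k. (\<integral>y. D' k y \<partial>\<nu>) < e) sequentially"
    using order_tendstoD(2)[OF D'_lim e] .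
  then obtain k where "(\<integral>y. D' k y \<partial>\<nu>) < e"
    by (auto simp: eventually_sequentially)
  then show ?thesis using that by blast
qed

lemma PW_LL:
  assumes R: "1 \<le> R"
  shows "indicator V y * \<psi> (rp y) \<le> \<psi> (piC (R+2) y) * lf (real k) (- W) (piC (R+2) y) * cutf R (piC (R+2) y)
    + indicator (frontier V) y + indicator (Sr (R / real CARD('d))) y + D' k y"
proof -
  let ?h = "\<lambda>x. \<psi> x * lf (real k) (- W) x * cutf R x"
  have k0: "0 \<le> real k" by simp
  have hnn: "0 \<le> ?h x" for x using \<psi>_nn lf_bounds[OF k0] cutf_bounds by (intro mult_nonneg_nonneg) auto
  have nn: "0 \<le> (indicator (frontier V) y :: real)" "0 \<le> (indicator (Sr (R / real CARD('d))) y :: real)"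
    "0 \<le> D' k y" using D'_bounds by auto
  show ?thesis
  proof (cases "y \<in> V")
    case False then show ?thesis using hnn[of "piC (R+2) y"] nn by simp
  next
    case True
    then obtain x where xW: "x \<in> W" and y: "y = ext_emb x" by (auto simp: V_def)
    have lhs: "indicator V y * \<psi> (rp y) = \<psi> x" using True y by simp
    show ?thesis
    proof (cases "R \<le> norm x")
      case True
      then have "y \<in> Sr (R / real CARD('d))" using ext_emb_big_Sr[of R x] y by simp
      then have "(indicator (Sr (R / real CARD('d))) y :: real) = 1" by simp
      then show ?thesis using lhs \<psi>_le[of x] hnn[of "piC (R+2) y"] nn by linarith
    next
      case False
      then have "piC (R+2) y = x" using kap_id[of x "R+2"] by (simp add: y piC_ext_emb)
      moreover have c1: "cutf R x = 1" using False by (simp add: cutf_def)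
      ultimately have hx: "?h (piC (R+2) y) = \<psi> x * lf (real k) (- W) x" by simp
      show ?thesis
      proof (cases "x \<in> interior W")
        case True
        then have "D' k y = 1 - lf (real k) (- W) x" using \<open>y \<in> V\<close> by (simp add: D'_def y)
        moreover have "\<psi> x * (1 - lf (real k) (- W) x) \<le> 1 - lf (real k) (- W) x"
          using \<psi>_le[of x] \<psi>_nn[of x] lf_bounds[OF k0, of "- W" x] by (simp add: mult_left_le_one_le)
        ultimately have A: "D' k y = 1 - lf (real k) (- W) x"
          and B: "\<psi> x \<le> \<psi> x * lf (real k) (- W) x + (1 - lf (real k) (- W) x)"
          by (simp_all add: algebra_simps)
        show ?thesis using lhs hx nn A B by linarith
      next
        case False
        then have "y \<in> frontier V" using frontier_W_V[of x] xW closure_subset[of W] y by blast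
        then have f1: "(indicator (frontier V) y :: real) = 1" by simp
        have "0 \<le> \<psi> x * lf (real k) (- W) x" using \<psi>_nn[of x] lf_bounds[OF k0, of "- W" x] by simp
        then show ?thesis using lhs hx \<psi>_le[of x] f1 nn by linarith
      qed
    qed
  qed
qed


lemma hL_props:
  fixes k :: nat
  assumes R: "1 \<le> R"
  defines "h \<equiv> \<lambda>x. \<psi> x * lf (real k) (- W) x * cutf R x"
  shows "continuous_on UNIV h" "\<And>x. norm x < \<delta>/2 \<Longrightarrow> h x = 0" "\<And>x. h (kap (R+2) x) = h x"
    "\<And>x. 0 \<le> h x" "\<And>x. h x \<le> 1"
proof -
  show "continuous_on UNIV h" unfolding h_def by (intro continuous_intros \<psi>_cont cont_lf cont_cutf)
  show "h x = 0" if "norm x < \<delta>/2" for x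
  proof -
    have "x \<notin> W" using W\<delta>[of x] that \<delta>_pos by auto
    then have "\<not> 0 < lf (real k) (- W) x" using lf_pos_in_W by blast
    then have "lf (real k) (- W) x = 0" using lf_bounds[of "real k" "- W" x] by simp
    then show ?thesis by (simp add: h_def)
  qed
  show "h (kap (R+2) x) = h x" for x by (rule kap_inv) (use R in \<open>auto simp: cutf_def h_def\<close>)
  show "0 \<le> h x" for x unfolding h_def using \<psi>_nn lf_bounds[of "real k"] cutf_bounds
    by (intro mult_nonneg_nonneg) auto
  show "h x \<le> 1" for x
  proof -
    have "h x \<le> lf (real k) (- W) x" unfolding h_def
      using \<psi>_nn[of x] \<psi>_le[of x] lf_bounds[of "real k" "- W" x] cutf_bounds[of R x]
      by (intro prod3_le) auto
    then show ?thesis using lf_bounds[of "real k" "- W" x] by linarith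
  qed
qed

lemma lower:
  assumes eps: "0 < \<epsilon>"
  shows "eventually (\<lambda>n. L - \<epsilon> \<le> a n) sequentially"
proof -
  define e where "e = \<epsilon> / 4"
  have e: "0 < e" using eps by (simp add: e_def)
  obtain R where R: "1 \<le> R" "measure \<nu> (Sr (R / real CARD('d))) < e" using R_choice[OF e] by blast
  define J where "J = (\<integral>y. jf \<delta> (piC (\<delta>/2) y) \<partial>\<nu>)"
  have J0: "0 \<le> J" using J_nonneg by (simp add: J_def)
  define \<eta> where "\<eta> = e / (J + 1)"
  have eta: "0 < \<eta>" using e J0 by (simp add: \<eta>_def)
  have etaJ: "\<eta> * J \<le> e"
  proof -
    have "\<eta> * J = e * (J / (J + 1))" by (simp add: \<eta>_def)
    also have "\<dots> \<le> e * 1" using e J0 by (intro mult_left_mono) auto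
    finally show ?thesis by simp
  qed
  obtain k where k: "(\<integral>y. D' k y \<partial>\<nu>) < e" using obtain_k'[OF e] by blast
  define h where "h = (\<lambda>x. \<psi> x * lf (real k) (- W) x * cutf R x)"
  note hp = hL_props[where k=k, OF R(1), folded h_def]
  define LL where "LL = (\<integral>y. h (piC (R+2) y) \<partial>\<nu>)"
  have hm[measurable]: "(\<lambda>y::ereal^'d. h (piC (R+2) y)) \<in> borel_measurable borel"
    using R by (intro borel_measurable_continuous_onI continuous_on_compose2[OF hp(1) continuous_piC]) auto
  have rpos: "0 < R / real CARD('d)" using R by simp
  have LL: "L \<le> LL + measure \<nu> (Sr (R / real CARD('d))) + (\<integral>y. D' k y \<partial>\<nu>)"
  proof -
    have intSR: "integrable \<nu> (indicator (Sr (R / real CARD('d))) :: _ \<Rightarrow> real)"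
      using Sr_sets[of "R / real CARD('d)"] Sr_fin[OF rpos] rpos by auto
    have inth: "integrable \<nu> (\<lambda>y. h (piC (R+2) y))"
    proof (rule intnu[OF hm rho_pos(2)])
      fix y :: "ereal^'d"
      show "\<bar>h (piC (R+2) y)\<bar> \<le> indicator (Sr ((\<delta>/2) / real CARD('d))) y"
      proof (cases "\<delta>/2 \<le> norm (piC (R+2) y)")
        case True
        then have "y \<in> Sr ((\<delta>/2) / real CARD('d))" using piC_big_Sr[of "R+2" "\<delta>/2" y] R by simp
        then show ?thesis using hp(4,5)[of "piC (R+2) y"] by (simp add: h_def)
      next
        case False
        then have "norm (piC (R+2) y) < \<delta>/2" by simp
        then have "h (piC (R+2) y) = 0" using hp(2) by (simp add: h_def)
        then show ?thesis by simp
      qed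
    qed
    have "L \<le> (\<integral>y. h (piC (R+2) y) + indicator (frontier V) y + indicator (Sr (R / real CARD('d))) y + D' k y \<partial>\<nu>)"
      unfolding L_def
    proof (rule integral_mono)
      show "integrable \<nu> (\<lambda>y. h (piC (R+2) y) + indicator (frontier V) y + indicator (Sr (R / real CARD('d))) y + D' k y)"
        using inth int_fV intSR int_D' by auto
      show "integrable \<nu> (\<lambda>y. indicator V y * \<psi> (rp y))" by (rule int_V)
      show "indicator V y * \<psi> (rp y) \<le> h (piC (R+2) y) + indicator (frontier V) y + indicator (Sr (R / real CARD('d))) y + D' k y" for y
        unfolding h_def by (rule PW_LL[OF R(1)])
    qed
    also have "\<dots> = LL + measure \<nu> (frontier V) + measure \<nu> (Sr (R / real CARD('d))) + (\<integral>y. D' k y \<partial>\<nu>)"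
      using inth int_fV intSR int_D' Sr_sets[of "R / real CARD('d)"] rpos by (simp add: LL_def)
    finally show ?thesis using measure_frontier_V by simp
  qed
  let ?Yn = "\<lambda>n \<omega>. inverse (real n) *\<^sub>R Y \<omega>"
  define A where "A n = (\<integral>\<omega>. h (kap (R+2) (?Yn n \<omega>)) \<partial>M) / q (real n)" for n
  define B where "B n = (\<integral>\<omega>. jf \<delta> (kap (\<delta>/2) (?Yn n \<omega>)) \<partial>M) / q (real n)" for n
  have Alim: "A \<longlonglongrightarrow> LL" unfolding A_def LL_def
  proof (rule TFn[of "R+2" h "\<delta>/2", OF _ hp(1)])
    show "h x = 0" if "norm x < \<delta>/2" for x using hp(2)[OF that] by (simp add: h_def)
  qed (use R \<delta>_pos in auto)
  have Blim: "B \<longlonglongrightarrow> J" unfolding B_def J_def by (rule j_lim)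
  have "(\<lambda>n. A n - \<eta> * B n) \<longlonglongrightarrow> LL - \<eta> * J"
    by (intro tendsto_intros Alim Blim)
  moreover have "L - \<epsilon> < LL - \<eta> * J"
    using LL k etaJ R(2) eps unfolding e_def by linarith
  ultimately have ev1: "eventually (\<lambda>n. L - \<epsilon> < A n - \<eta> * B n) sequentially"
    by (rule order_tendstoD(1))
  have ev2: "eventually (\<lambda>n. \<forall>x. norm x \<le> R + 2 \<longrightarrow> \<bar>\<psi>n n x - \<psi> x\<bar> \<le> \<eta>) sequentially"
    by (rule unif[OF eta])
  show ?thesis
    using ev1 ev2
  proof eventually_elim
    case (elim n)
    have pw: "h (kap (R+2) (?Yn n \<omega>)) - \<eta> * jf \<delta> (kap (\<delta>/2) (?Yn n \<omega>)) \<le>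
        \<psi>n n (?Yn n \<omega>) * indicator W (?Yn n \<omega>)" for \<omega>
      using PW_lower[of R "real k" n \<eta> "?Yn n \<omega>"] elim(2) R hp(3) by (simp add: h_def)
    have [measurable]: "h \<in> borel_measurable borel" by (rule borel_measurable_continuous_onI[OF hp(1)])
    have [measurable]: "jf \<delta> \<in> borel_measurable borel" by (rule borel_measurable_continuous_onI[OF cont_jf])
    have [measurable]: "kap C \<in> borel_measurable borel" for C :: real
      unfolding kap_def by (subst borel_measurable_euclidean_space) (auto simp: Basis_vec_def inner_axis)
    have i1: "integrable M (\<lambda>\<omega>. h (kap (R+2) (?Yn n \<omega>)))"
    proof (rule intM[where B=1])
      show "(\<lambda>x. h (kap (R+2) x)) \<in> borel_measurable borel" by measurable
      show "\<bar>h (kap (R+2) x)\<bar> \<le> 1" for x using hp(4,5)[of "kap (R+2) x"] by (simp add: h_def)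
    qed
    have i2: "integrable M (\<lambda>\<omega>. jf \<delta> (kap (\<delta>/2) (?Yn n \<omega>)))"
      by (rule intM[where B=1]) (auto intro: jf_abs)
    have i0: "integrable M (\<lambda>\<omega>. \<psi>n n (?Yn n \<omega>) * indicator W (?Yn n \<omega>))"
      by (rule intM[where B=1]) (use \<psi>n_nn \<psi>n_le in \<open>auto simp: abs_le_iff indicator_def\<close>)
    have "(\<integral>\<omega>. h (kap (R+2) (?Yn n \<omega>)) \<partial>M) - \<eta> * (\<integral>\<omega>. jf \<delta> (kap (\<delta>/2) (?Yn n \<omega>)) \<partial>M)
        = (\<integral>\<omega>. h (kap (R+2) (?Yn n \<omega>)) - \<eta> * jf \<delta> (kap (\<delta>/2) (?Yn n \<omega>)) \<partial>M)"
      using i1 i2 by simp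
    also have "\<dots> \<le> (\<integral>\<omega>. \<psi>n n (?Yn n \<omega>) * indicator W (?Yn n \<omega>) \<partial>M)"
      by (rule integral_mono[OF _ i0 pw]) (use i1 i2 in auto)
    finally have ineq: "(\<integral>\<omega>. h (kap (R+2) (?Yn n \<omega>)) \<partial>M) - \<eta> * (\<integral>\<omega>. jf \<delta> (kap (\<delta>/2) (?Yn n \<omega>)) \<partial>M)
        \<le> (\<integral>\<omega>. \<psi>n n (?Yn n \<omega>) * indicator W (?Yn n \<omega>) \<partial>M)" .
    have "((\<integral>\<omega>. h (kap (R+2) (?Yn n \<omega>)) \<partial>M) - \<eta> * (\<integral>\<omega>. jf \<delta> (kap (\<delta>/2) (?Yn n \<omega>)) \<partial>M)) / q (real n) \<le> a n"
      unfolding a_def by (rule divide_right_mono[OF ineq q_nonneg])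
    moreover have "((\<integral>\<omega>. h (kap (R+2) (?Yn n \<omega>)) \<partial>M) - \<eta> * (\<integral>\<omega>. jf \<delta> (kap (\<delta>/2) (?Yn n \<omega>)) \<partial>M)) / q (real n) = A n - \<eta> * B n"
      by (simp add: A_def B_def diff_divide_distrib)
    ultimately show ?case using elim(1) by simp
  qed
qed

theorem core_lim: "a \<longlonglongrightarrow> L"
proof (rule tendstoI)
  fix e :: real assume e: "0 < e"
  have "eventually (\<lambda>n. a n \<le> L + e/2) sequentially" using upper[of "e/2"] e by simp
  moreover have "eventually (\<lambda>n. L - e/2 \<le> a n) sequentially" using lower[of "e/2"] e by simp
  ultimately show "eventually (\<lambda>n. dist (a n) L < e) sequentially"
    by eventually_elim (use e in \<open>auto simp: dist_real_def abs_less_iff\<close>)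
qed

end


lemma inv_facts:
  fixes A :: "real^'d^'d"
  assumes "invertible A"
  shows "A *v (matrix_inv A *v y) = y" "matrix_inv A *v (A *v x) = x"
proof -
  have "A ** matrix_inv A = mat 1 \<and> matrix_inv A ** A = mat 1"
    using assms unfolding invertible_def matrix_inv_def by (rule someI_ex)
  then show "A *v (matrix_inv A *v y) = y" "matrix_inv A *v (A *v x) = x"
    by (simp_all add: matrix_vector_mul_assoc)
qed

lemma floor_lim: "(\<lambda>n. real_of_int \<lfloor>real n * t\<rfloor> / real n) \<longlonglongrightarrow> t"
proof (rule tendsto_sandwich[where f="\<lambda>n. t - 1 / real n" and h="\<lambda>n. t"])
  show "eventually (\<lambda>n. t - 1 / real n \<le> real_of_int \<lfloor>real n * t\<rfloor> / real n) sequentially"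
    using eventually_gt_at_top[of "0::nat"]
  proof eventually_elim
    case (elim n)
    have "real n * t - 1 \<le> real_of_int \<lfloor>real n * t\<rfloor>" by linarith
    then have "(real n * t - 1) / real n \<le> real_of_int \<lfloor>real n * t\<rfloor> / real n"
      using elim by (intro divide_right_mono) auto
    then show ?case using elim by (simp add: diff_divide_distrib)
  qed
  show "eventually (\<lambda>n. real_of_int \<lfloor>real n * t\<rfloor> / real n \<le> t) sequentially"
    using eventually_gt_at_top[of "0::nat"]
  proof eventually_elim
    case (elim n)
    have "real_of_int \<lfloor>real n * t\<rfloor> \<le> real n * t" by linarith
    then show ?case using elim by (simp add: divide_le_eq mult.commute)
  qed
  show "(\<lambda>n. t - 1 / real n) \<longlonglongrightarrow> t"
    using tendsto_diff[OF tendsto_const[of t] lim_inverse_n'] by simp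
qed simp

lemma step_eval:
  fixes c :: "nat \<Rightarrow> real"
  assumes n: "0 < n" and t: "0 \<le> t" "t < 1"
  shows "(\<Sum>i<n. c i * indicator {real i / real n ..< real (Suc i) / real n} t) = c (nat \<lfloor>real n * t\<rfloor>)"
proof -
  let ?m = "nat \<lfloor>real n * t\<rfloor>"
  have ind: "indicator {real i / real n ..< real (Suc i) / real n} t = (if i = ?m then 1 else (0::real))" for i
  proof -
    have "t \<in> {real i / real n ..< real (Suc i) / real n} \<longleftrightarrow> real i \<le> real n * t \<and> real n * t < real i + 1"
      using n by (auto simp: field_simps)
    also have "\<dots> \<longleftrightarrow> \<lfloor>real n * t\<rfloor> = int i" by (simp add: floor_eq_iff)
    also have "\<dots> \<longleftrightarrow> i = ?m" using t by auto
    finally show ?thesis by (simp add: indicator_def)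
  qed
  have "?m < n"
  proof -
    have "real n * t < real n" using n t by simp
    then have "\<lfloor>real n * t\<rfloor> < int n" by (simp add: floor_less_iff)
    moreover have "0 \<le> \<lfloor>real n * t\<rfloor>" using t by simp
    ultimately show ?thesis by (simp add: nat_less_iff)
  qed
  have "(\<Sum>i<n. c i * indicator {real i / real n ..< real (Suc i) / real n} t) = (\<Sum>i<n. if i = ?m then c i else 0)"
    by (intro sum.cong refl) (subst ind, simp)
  also have "\<dots> = c ?m" using \<open>?m < n\<close> by (subst sum.delta) auto
  finally show ?thesis .
qed

lemma step_zero:
  fixes c :: "nat \<Rightarrow> real"
  assumes n: "0 < n" and t: "t < 0 \<or> 1 \<le> t"
  shows "(\<Sum>i<n. c i * indicator {real i / real n ..< real (Suc i) / real n} t) = 0"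
proof (rule sum.neutral, rule ballI)
  fix i assume i: "i \<in> {..<n}"
  have "t \<notin> {real i / real n ..< real (Suc i) / real n}"
  proof
    assume "t \<in> {real i / real n ..< real (Suc i) / real n}"
    then have a: "real i \<le> real n * t" "real n * t < real i + 1" using n by (auto simp: field_simps)
    show False
    proof (cases "t < 0")
      case True then have "real n * t < 0" using n by (simp add: mult_pos_neg)
      then show False using a by simp
    next
      case False then have "1 \<le> t" using t by simp
      then have "real n \<le> real n * t" using n by simp
      then show False using a i by simp
    qed
  qed
  then show "c i * indicator {real i / real n ..< real (Suc i) / real n} t = 0" by simp
qed

definition Unif :: "real measure" where "Unif = uniform_measure lborel {0..1}"

lemma Unif_prob: "prob_space Unif"
  unfolding Unif_def by (rule prob_space_uniform_measure) auto

lemma sets_Unif[simp]: "sets Unif = sets borel"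
  by (simp add: Unif_def)

lemma step_integral:
  fixes c :: "nat \<Rightarrow> real"
  assumes n: "0 < n"
  shows "(\<integral>t. (\<Sum>i<n. c i * indicator {real i / real n ..< real (Suc i) / real n} t) \<partial>Unif) = (\<Sum>i<n. c i) / real n"
proof -
  have m: "measure Unif {real i / real n ..< real (Suc i) / real n} = 1 / real n" if "i < n" for i
  proof -
    have "{real i / real n ..< real (Suc i) / real n} \<subseteq> {0..1}"
    proof
      fix x assume x: "x \<in> {real i / real n ..< real (Suc i) / real n}"
      have a: "0 \<le> real i / real n" by simp
      have b: "real (Suc i) / real n \<le> 1" using that n by simp
      have x1: "real i / real n \<le> x" and x2: "x < real (Suc i) / real n" using x by auto
      have "0 \<le> x" using a x1 by linarith
      moreover have "x \<le> 1" using b x2 by linarith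
      ultimately show "x \<in> {0..1}" by simp
    qed
    then have sub: "{0..1} \<inter> {real i / real n ..< real (Suc i) / real n} = {real i / real n ..< real (Suc i) / real n}"
      by blast
    have le: "real i / real n \<le> real (Suc i) / real n" using n by (simp add: divide_right_mono)
    have "measure lborel {real i / real n ..< real (Suc i) / real n} = real (Suc i) / real n - real i / real n"
      using le by (simp add: measure_def)
    also have "\<dots> = 1 / real n" by (simp add: diff_divide_distrib[symmetric])
    finally have ml: "measure lborel {real i / real n ..< real (Suc i) / real n} = 1 / real n" .
    have "measure Unif {real i / real n ..< real (Suc i) / real n}
        = measure lborel ({0..1} \<inter> {real i / real n ..< real (Suc i) / real n}) / measure lborel {0..1::real}"
      unfolding Unif_def by (rule measure_uniform_measure) auto
    also have "\<dots> = 1 / real n" unfolding sub ml by simp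
    finally show ?thesis .
  qed
  have fin: "emeasure Unif {real i / real n ..< real (Suc i) / real n} < \<infinity>" for i
  proof -
    interpret prob_space Unif by (rule Unif_prob)
    show ?thesis using less_top[THEN iffD1, OF emeasure_finite] by (simp add: infinity_ennreal_def)
  qed
  have "(\<integral>t. (\<Sum>i<n. c i * indicator {real i / real n ..< real (Suc i) / real n} t) \<partial>Unif)
      = (\<Sum>i<n. c i * measure Unif {real i / real n ..< real (Suc i) / real n})"
    using fin by (subst Bochner_Integration.integral_sum) (auto intro!: sum.cong)
  also have "\<dots> = (\<Sum>i<n. c i / real n)" by (intro sum.cong refl) (simp del: of_nat_Suc add: m)
  finally show ?thesis by (simp add: sum_divide_distrib)
qed


lemma unif_conv:
  fixes g :: "real \<Rightarrow> real^'d \<Rightarrow> real"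
  assumes cg: "continuous_on UNIV (\<lambda>p. g (fst p) (snd p))" and tn: "tn \<longlonglongrightarrow> t" and e: "0 < e"
  shows "eventually (\<lambda>n. \<forall>x. norm x \<le> r \<longrightarrow> \<bar>g (tn n) x - g t x\<bar> \<le> e) sequentially"
proof -
  let ?S = "cball t 1 \<times> cball (0::real^'d) r"
  have "compact ?S" by (intro compact_Times compact_cball)
  then have "uniformly_continuous_on ?S (\<lambda>p. g (fst p) (snd p))"
    by (intro compact_uniformly_continuous continuous_on_subset[OF cg]) auto
  then obtain d where d: "0 < d"
    "\<And>p p'. p \<in> ?S \<Longrightarrow> p' \<in> ?S \<Longrightarrow> dist p' p < d \<Longrightarrow> dist (g (fst p') (snd p')) (g (fst p) (snd p)) < e"
    unfolding uniformly_continuous_on_def using e by metis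
  have "eventually (\<lambda>n. dist (tn n) t < min d 1) sequentially" using tn d by (intro tendstoD) auto
  then show ?thesis
  proof eventually_elim
    case (elim n)
    show ?case
    proof (intro allI impI)
      fix x :: "real^'d" assume x: "norm x \<le> r"
      have p: "(t, x) \<in> ?S" "(tn n, x) \<in> ?S" using x elim by (auto simp: dist_commute)
      have "dist (tn n, x) (t, x) < d" using elim by (simp add: dist_Pair_Pair)
      then have "dist (g (tn n) x) (g t x) < e" using d(2)[OF p] by simp
      then show "\<bar>g (tn n) x - g t x\<bar> \<le> e" by (simp add: dist_real_def)
    qed
  qed
qed

lemma inv_image_eq:
  fixes A :: "real^'d^'d"
  assumes "invertible A"
  shows "(\<lambda>y. matrix_inv A *v y) ` S = {x. A *v x \<in> S}"
proof
  show "(\<lambda>y. matrix_inv A *v y) ` S \<subseteq> {x. A *v x \<in> S}" using inv_facts[OF assms] by auto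
  show "{x. A *v x \<in> S} \<subseteq> (\<lambda>y. matrix_inv A *v y) ` S"
  proof
    fix x assume "x \<in> {x. A *v x \<in> S}"
    then have "A *v x \<in> S" by simp
    moreover have "x = matrix_inv A *v (A *v x)" using inv_facts[OF assms] by simp
    ultimately show "x \<in> (\<lambda>y. matrix_inv A *v y) ` S" by blast
  qed
qed


lemma PX_integral:
  fixes \<nu> :: "(ereal^'d) measure" and A :: "real^'d^'d" and X :: "'b \<Rightarrow> real^'d" and g :: "real^'d \<Rightarrow> real"
  assumes sets_nu: "sets \<nu> = sets borel" and inv: "invertible A" and \<Gamma>b: "\<Gamma> \<in> sets borel"
    and Vpos: "0 < emeasure \<nu> (ext_emb ` ((\<lambda>y. matrix_inv A *v y) ` \<Gamma>))"
    and Vfin: "emeasure \<nu> (ext_emb ` ((\<lambda>y. matrix_inv A *v y) ` \<Gamma>)) < \<infinity>"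
    and Xm: "X \<in> borel_measurable N"
    and hyp: "\<And>B. B \<in> sets borel \<Longrightarrow>
           emeasure (distr N borel X) B =
             emeasure \<nu> (ext_emb ` ((\<lambda>y. matrix_inv A *v y) ` (B \<inter> \<Gamma>)))
             / emeasure \<nu> (ext_emb ` ((\<lambda>y. matrix_inv A *v y) ` \<Gamma>))"
    and gm[measurable]: "g \<in> borel_measurable borel"
  shows "(\<integral>x. g x \<partial>distr N borel X) =
    (\<integral>y. indicator (ext_emb ` ((\<lambda>y. matrix_inv A *v y) ` \<Gamma>)) y * g (A *v rp y) \<partial>\<nu>)
      / measure \<nu> (ext_emb ` ((\<lambda>y. matrix_inv A *v y) ` \<Gamma>))"
proof -
  define V where "V = ext_emb ` ((\<lambda>y. matrix_inv A *v y) ` \<Gamma>)"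
  have V_eq: "V = ext_emb ` {x. A *v x \<in> \<Gamma>}" unfolding V_def inv_image_eq[OF inv] ..
  have Am[measurable]: "(\<lambda>x. A *v x) \<in> borel_measurable borel"
    by (intro borel_measurable_continuous_onI matrix_vector_mult_linear_continuous_on)
  have Wm[measurable]: "{x. A *v x \<in> \<Gamma>} \<in> sets borel" using \<Gamma>b by measurable
  have Vm[measurable]: "V \<in> sets borel" unfolding V_eq by (rule sets_ext_emb_image[OF Wm])
  define mV where "mV = measure \<nu> V"
  have eV: "emeasure \<nu> V = ennreal mV"
    using Vfin by (simp add: mV_def V_def emeasure_eq_ennreal_measure less_top)
  have mV: "0 < mV" using Vpos eV by (simp add: V_def[symmetric])
  define T where "T y = A *v rp y" for y
  have Tm[measurable]: "T \<in> borel_measurable borel" unfolding T_def by measurable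
  have dm[measurable]: "(\<lambda>y. indicator V y / mV) \<in> borel_measurable borel" by measurable
  have meas_eq: "measurable \<nu> = measurable borel" by (intro ext measurable_cong_sets sets_nu refl)
  define \<Lambda> where "\<Lambda> = density \<nu> (\<lambda>y. ennreal (indicator V y / mV))"
  have sets_\<Lambda>: "sets \<Lambda> = sets borel" by (simp add: \<Lambda>_def sets_nu)
  have space_\<Lambda>: "space \<Lambda> = UNIV" using sets_eq_imp_space_eq[OF sets_\<Lambda>] by simp
  have space_nu: "space \<nu> = UNIV" using sets_eq_imp_space_eq[OF sets_nu] by simp
  have PX: "distr N borel X = distr \<Lambda> borel T"
  proof (rule measure_eqI)
    show "sets (distr N borel X) = sets (distr \<Lambda> borel T)" by simp
    fix B assume "B \<in> sets (distr N borel X)"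
    then have B[measurable]: "B \<in> sets borel" by simp
    have TB[measurable]: "T -` B \<in> sets borel" using measurable_sets[OF Tm B] by simp
    have set_eq: "V \<inter> T -` B = ext_emb ` ((\<lambda>y. matrix_inv A *v y) ` (B \<inter> \<Gamma>))"
      unfolding inv_image_eq[OF inv] V_eq by (auto simp: T_def)
    have Sfin: "emeasure \<nu> (V \<inter> T -` B) \<le> emeasure \<nu> V"
      by (rule emeasure_mono) (auto simp: sets_nu)
    then have Sfin': "emeasure \<nu> (V \<inter> T -` B) = ennreal (measure \<nu> (V \<inter> T -` B))"
      using eV by (intro emeasure_eq_ennreal_measure) (auto simp: top_unique)
    have "emeasure (distr \<Lambda> borel T) B = emeasure \<Lambda> (T -` B)"
      using Tm B by (subst emeasure_distr) (simp_all add: measurable_cong_sets[OF sets_\<Lambda> refl] space_\<Lambda>)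
    also have "\<dots> = (\<integral>\<^sup>+y. ennreal (indicator V y / mV) * indicator (T -` B) y \<partial>\<nu>)"
      unfolding \<Lambda>_def by (subst emeasure_density) (simp_all add: meas_eq sets_nu)
    also have "\<dots> = (\<integral>\<^sup>+y. ennreal (1 / mV) * indicator (V \<inter> T -` B) y \<partial>\<nu>)"
      by (intro nn_integral_cong) (auto simp: indicator_def)
    also have "\<dots> = ennreal (1 / mV) * emeasure \<nu> (V \<inter> T -` B)"
      by (subst nn_integral_cmult_indicator) (simp_all add: sets_nu)
    also have "\<dots> = emeasure \<nu> (V \<inter> T -` B) / emeasure \<nu> V"
      using mV unfolding Sfin' eV
      by (simp add: divide_ennreal ennreal_mult'' [symmetric] measure_nonneg)
    also have "\<dots> = emeasure (distr N borel X) B"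
      using hyp[OF B] set_eq by (simp add: V_def)
    finally show "emeasure (distr N borel X) B = emeasure (distr \<Lambda> borel T) B" ..
  qed
  have "(\<integral>x. g x \<partial>distr N borel X) = (\<integral>y. g (T y) \<partial>\<Lambda>)"
    unfolding PX by (rule integral_distr) (simp_all add: measurable_cong_sets[OF sets_\<Lambda> refl])
  also have "\<dots> = (\<integral>y. (indicator V y / mV) *\<^sub>R g (T y) \<partial>\<nu>)"
    unfolding \<Lambda>_def by (rule integral_density) (use mV in \<open>simp_all add: meas_eq\<close>)
  also have "\<dots> = (\<integral>y. indicator V y * g (A *v rp y) \<partial>\<nu>) / mV"
    by (simp add: T_def)
  finally show ?thesis by (simp add: mV_def V_def)
qed


theorem lemma3p5:
  fixes M :: "'a measure" and Z :: "int \<Rightarrow> 'a \<Rightarrow> real^'d" and \<alpha> :: real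
    and \<nu> :: "(ereal^'d) measure" and A :: "real^'d^'d" and \<Gamma> :: "(real^'d) set"
    and f :: "real \<Rightarrow> real^'d \<Rightarrow> real"
    and N :: "'b measure" and U :: "'b \<Rightarrow> real" and X :: "'b \<Rightarrow> real^'d"
  assumes "prob_space M"
    and "prob_space.indep_vars M (\<lambda>_. borel) Z UNIV"
    and "\<And>i. distr M borel (Z i) = distr M borel (Z 0)"
    and "\<And>i. integrable M (Z i)"
    and "\<And>i. (\<integral>\<omega>. Z i \<omega> \<partial>M) = 0"
    and "\<alpha> > 1"
    and "regularly_varying M (Z 0) \<alpha> \<nu>"
    and "invertible A"
    and "admissible_failure_set \<nu> A \<Gamma>"
    and "\<And>t x. f t x \<ge> 0"
    and "continuous_on UNIV (\<lambda>(t, x). f t x)"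
    and "prob_space N"
    and "U \<in> borel_measurable N" and "X \<in> borel_measurable N"
    and "distr N borel U = uniform_measure lborel {0..1}"
    and "\<And>B. B \<in> sets borel \<Longrightarrow>
           emeasure (distr N borel X) B =
             emeasure \<nu> (ext_emb ` ((\<lambda>y. matrix_inv A *v y) ` (B \<inter> \<Gamma>)))
             / emeasure \<nu> (ext_emb ` ((\<lambda>y. matrix_inv A *v y) ` \<Gamma>))"
    and "distr N borel (\<lambda>\<omega>. (U \<omega>, X \<omega>)) = distr N borel U \<Otimes>\<^sub>M distr N borel X"
  shows "(\<lambda>n. (\<Sum>i<n. cond_exp_event M
              (\<lambda>\<omega>. exp (- f (real i / real n) (inverse (real n) *\<^sub>R (A *v Z (int i) \<omega>))))
              {\<omega>\<in>space M. A *v Z (int i) \<omega> \<in> (\<lambda>y. real n *\<^sub>R y) ` \<Gamma>}) / real n)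
         \<longlonglongrightarrow> (\<integral>\<omega>. exp (- f (U \<omega>) (X \<omega>)) \<partial>N)"
proof -
  interpret PM: prob_space M by (rule assms(1))
  interpret PN: prob_space N by (rule assms(12))
  have Zm[measurable]: "Z i \<in> borel_measurable M" for i using assms(4)[of i] by (rule borel_measurable_integrable)
  define Y where "Y = Z 0"
  have Ym[measurable]: "Y \<in> borel_measurable M" by (simp add: Y_def)
  have RVs: "RVs M Y \<alpha> \<nu>" by unfold_locales (use assms(1,6,7) in \<open>simp_all add: Y_def\<close>)
  interpret R: RVs M Y \<alpha> \<nu> by (rule RVs)
  have inv: "invertible A" by (rule assms(8))
  obtain \<delta>0 where \<Gamma>b[measurable]: "\<Gamma> \<in> sets borel" and \<delta>0: "0 < \<delta>0" "\<Gamma> \<subseteq> {y. norm y > \<delta>0}"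
    and Vpos: "emeasure \<nu> (ext_emb ` ((\<lambda>y. matrix_inv A *v y) ` \<Gamma>)) > 0"
    and Vfr: "emeasure \<nu> (frontier (ext_emb ` ((\<lambda>y. matrix_inv A *v y) ` \<Gamma>))) = 0"
    using assms(9) unfolding admissible_failure_set_def by blast
  define W where "W = (\<lambda>y. matrix_inv A *v y) ` \<Gamma>"
  have W_eq: "W = {x. A *v x \<in> \<Gamma>}" unfolding W_def by (rule inv_image_eq[OF inv])
  have Am[measurable]: "(\<lambda>x. A *v x) \<in> borel_measurable borel"
    by (intro borel_measurable_continuous_onI matrix_vector_mult_linear_continuous_on)
  have Wb[measurable]: "W \<in> sets borel" unfolding W_eq by measurable
  define V where "V = ext_emb ` W"
  obtain K where K: "0 < K" "\<And>x. norm (A *v x) \<le> norm x * K"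
    using bounded_linear.pos_bounded[of "\<lambda>x. A *v x"] linear_conv_bounded_linear[of "\<lambda>x. A *v x"] by auto
  define \<delta> where "\<delta> = \<delta>0 / K"
  have \<delta>: "0 < \<delta>" using \<delta>0 K by (simp add: \<delta>_def)
  have W\<delta>: "\<delta> < norm x" if "x \<in> W" for x
  proof -
    have "\<delta>0 < norm (A *v x)" using that \<delta>0 W_eq by auto
    also have "\<dots> \<le> norm x * K" by (rule K(2))
    finally show ?thesis using K by (simp add: \<delta>_def field_simps)
  qed
  have Vfin: "emeasure \<nu> V < \<infinity>"
  proof -
    have "V \<subseteq> Sr (\<delta> / real CARD('d))"
    proof
      fix y assume "y \<in> V"
      then obtain x where "x \<in> W" "y = ext_emb x" by (auto simp: V_def)
      then show "y \<in> Sr (\<delta> / real CARD('d))" using W\<delta> ext_emb_big_Sr[of \<delta> x] by force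
    qed
    then have "emeasure \<nu> V \<le> emeasure \<nu> (Sr (\<delta> / real CARD('d)))"
      by (intro emeasure_mono) (use R.Sr_sets \<delta> in auto)
    also have "\<dots> < \<infinity>" using R.Sr_fin \<delta> by simp
    finally show ?thesis .
  qed
  define mV where "mV = measure \<nu> V"
  have mV: "0 < mV" using Vpos Vfin by (simp add: mV_def V_def W_def emeasure_eq_ennreal_measure less_top)
  have W_ne: "W \<noteq> {}" using Vpos by (auto simp: W_def)
  define \<phi> where "\<phi> t x = exp (- f t (A *v x))" for t x
  have fc: "continuous_on UNIV (\<lambda>p::real \<times> (real^'d). f (fst p) (A *v snd p))"
  proof -
    have c0: "continuous_on UNIV (\<lambda>p::real \<times> (real^'d). A *v snd p)"
      by (rule continuous_on_compose2[OF matrix_vector_mult_linear_continuous_on continuous_on_snd]) auto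
    have c1: "continuous_on UNIV (\<lambda>p::real \<times> (real^'d). (fst p, A *v snd p))"
      by (intro continuous_on_Pair continuous_on_fst continuous_on_id c0)
    show ?thesis using continuous_on_compose2[OF assms(11) c1] by simp
  qed
  have \<phi>c: "continuous_on UNIV (\<lambda>p. \<phi> (fst p) (snd p))"
    unfolding \<phi>_def by (intro continuous_intros fc)
  have \<phi>b: "0 \<le> \<phi> t x" "\<phi> t x \<le> 1" for t x using assms(10)[of t "A *v x"] by (auto simp: \<phi>_def)
  have \<phi>cx: "continuous_on UNIV (\<phi> t)" for t
  proof -
    have c1: "continuous_on UNIV (\<lambda>x::real^'d. (t, x))" by (intro continuous_intros)
    have "continuous_on UNIV (\<lambda>x::real^'d. \<phi> (fst (t, x)) (snd (t, x)))"
      using continuous_on_compose2[OF \<phi>c c1] by simp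
    then show ?thesis by simp
  qed
  let ?Yn = "\<lambda>n \<omega>. inverse (real n) *\<^sub>R Y \<omega>"
  have core: "(\<lambda>n. (\<integral>\<omega>. \<phi> (tn n) (?Yn n \<omega>) * indicator W (?Yn n \<omega>) \<partial>M) / R.q (real n))
      \<longlonglongrightarrow> (\<integral>y. indicator V y * \<phi> t (rp y) \<partial>\<nu>)" if tn: "tn \<longlonglongrightarrow> t" for tn t
  proof -
    interpret C: Core M Y \<alpha> \<nu> W \<delta> "\<lambda>n. \<phi> (tn n)" "\<phi> t"
      by (intro Core.intro RVs Core_axioms.intro Wb \<delta> W_ne \<phi>b \<phi>cx unif_conv[OF \<phi>c tn])
         (use W\<delta> Vfr in \<open>auto simp: W_def\<close>)
    show ?thesis using C.core_lim unfolding C.a_def[abs_def] C.L_def C.V_def V_def .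
  qed
  have core1: "(\<lambda>n. (\<integral>\<omega>. indicator W (?Yn n \<omega>) \<partial>M) / R.q (real n)) \<longlonglongrightarrow> mV"
  proof -
    interpret C: Core M Y \<alpha> \<nu> W \<delta> "\<lambda>n x. 1" "\<lambda>x. 1"
      by (intro Core.intro RVs Core_axioms.intro Wb \<delta> W_ne)
         (use W\<delta> Vfr in \<open>auto simp: W_def\<close>)
    have "(\<integral>y. indicator V y * 1 \<partial>\<nu>) = mV"
      using sets_ext_emb_image[OF Wb] Vfin by (simp add: mV_def V_def R.sets_nu)
    then show ?thesis using C.core_lim unfolding C.a_def[abs_def] C.L_def C.V_def V_def by simp
  qed
  define Fn where "Fn n t = (\<integral>\<omega>. \<phi> t (?Yn n \<omega>) * indicator W (?Yn n \<omega>) \<partial>M) / (\<integral>\<omega>. indicator W (?Yn n \<omega>) \<partial>M)" for n t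
  define PX where "PX = distr N borel X"
  have Xm[measurable]: "X \<in> borel_measurable N" by (rule assms(14))
  have Um[measurable]: "U \<in> borel_measurable N" by (rule assms(13))
  have PXp: "prob_space PX" unfolding PX_def by (rule PN.prob_space_distr) simp
  have sets_PX[simp]: "sets PX = sets borel" by (simp add: PX_def)
  have gc: "continuous_on UNIV (\<lambda>p::real \<times> (real^'d). exp (- f (fst p) (snd p)))"
    using assms(11) by (intro continuous_intros) (simp add: case_prod_beta')
  have gx[measurable]: "(\<lambda>x. exp (- f t x)) \<in> borel_measurable borel" for t
  proof -
    have c1: "continuous_on UNIV (\<lambda>x::real^'d. (t, x))" by (intro continuous_intros)
    have "continuous_on UNIV (\<lambda>x::real^'d. exp (- f (fst (t, x)) (snd (t, x))))"
      using continuous_on_compose2[OF gc c1] by simp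
    then show ?thesis by (intro borel_measurable_continuous_onI) simp
  qed
  define G where "G t = (\<integral>x. exp (- f t x) \<partial>PX)" for t
  have Gid: "G t = (\<integral>y. indicator V y * \<phi> t (rp y) \<partial>\<nu>) / mV" for t
  proof -
    have "G t = (\<integral>y. indicator (ext_emb ` ((\<lambda>y. matrix_inv A *v y) ` \<Gamma>)) y * exp (- f t (A *v rp y)) \<partial>\<nu>)
      / measure \<nu> (ext_emb ` ((\<lambda>y. matrix_inv A *v y) ` \<Gamma>))"
      unfolding G_def PX_def
      by (rule PX_integral[OF R.sets_nu inv \<Gamma>b Vpos _ Xm assms(16) gx])
         (use Vfin in \<open>simp add: V_def W_def\<close>)
    then show ?thesis by (simp add: V_def W_def mV_def \<phi>_def)
  qed
  have CC: "(\<lambda>n. Fn n (tn n)) \<longlonglongrightarrow> G t" if tn: "tn \<longlonglongrightarrow> t" for tn t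
  proof -
    have "(\<lambda>n. ((\<integral>\<omega>. \<phi> (tn n) (?Yn n \<omega>) * indicator W (?Yn n \<omega>) \<partial>M) / R.q (real n)) /
               ((\<integral>\<omega>. indicator W (?Yn n \<omega>) \<partial>M) / R.q (real n)))
        \<longlonglongrightarrow> (\<integral>y. indicator V y * \<phi> t (rp y) \<partial>\<nu>) / mV"
      by (rule tendsto_divide[OF core[OF tn] core1]) (use mV in simp)
    moreover have "eventually (\<lambda>n. 0 < (\<integral>\<omega>. indicator W (?Yn n \<omega>) \<partial>M) / R.q (real n)) sequentially"
      by (rule order_tendstoD(1)[OF core1 mV])
    then have "eventually (\<lambda>n. ((\<integral>\<omega>. \<phi> (tn n) (?Yn n \<omega>) * indicator W (?Yn n \<omega>) \<partial>M) / R.q (real n)) /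
               ((\<integral>\<omega>. indicator W (?Yn n \<omega>) \<partial>M) / R.q (real n)) = Fn n (tn n)) sequentially"
    proof eventually_elim
      case (elim n)
      then have "R.q (real n) \<noteq> 0" by auto
      then show ?case by (simp add: Fn_def)
    qed
    ultimately show ?thesis unfolding Gid by (rule Lim_transform_eventually)
  qed
  have Fn_bounds: "0 \<le> Fn n t \<and> Fn n t \<le> 1" for n t
  proof -
    have [measurable]: "\<phi> t \<in> borel_measurable borel" by (rule borel_measurable_continuous_onI[OF \<phi>cx])
    have i1: "integrable M (\<lambda>\<omega>. \<phi> t (?Yn n \<omega>) * indicator W (?Yn n \<omega>))"
      by (rule PM.integrable_const_bound[where B=1]) (use \<phi>b in \<open>auto simp: indicator_def\<close>)
    have i2: "integrable M (\<lambda>\<omega>. indicator W (?Yn n \<omega>) :: real)"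
      by (rule PM.integrable_const_bound[where B=1]) (auto simp: indicator_def)
    have a: "(\<integral>\<omega>. \<phi> t (?Yn n \<omega>) * indicator W (?Yn n \<omega>) \<partial>M) \<le> (\<integral>\<omega>. indicator W (?Yn n \<omega>) \<partial>M)"
      by (rule integral_mono[OF i1 i2]) (use \<phi>b in \<open>auto simp: indicator_def\<close>)
    have b: "0 \<le> (\<integral>\<omega>. \<phi> t (?Yn n \<omega>) * indicator W (?Yn n \<omega>) \<partial>M)"
      by (rule integral_nonneg_AE) (use \<phi>b in simp)
    show ?thesis using a b by (auto simp: Fn_def divide_le_eq_1)
  qed
  have \<phi>m[measurable]: "\<phi> t \<in> borel_measurable borel" for t by (rule borel_measurable_continuous_onI[OF \<phi>cx])
  have distr_eq: "(\<integral>\<omega>. h (Z i \<omega>) \<partial>M) = (\<integral>\<omega>. h (Y \<omega>) \<partial>M)"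
    if hm: "h \<in> borel_measurable borel" for i and h :: "real^'d \<Rightarrow> real"
  proof -
    have "(\<integral>\<omega>. h (Z i \<omega>) \<partial>M) = integral\<^sup>L (distr M borel (Z i)) h" by (rule integral_distr[OF Zm hm, symmetric])
    also have "\<dots> = integral\<^sup>L (distr M borel (Z 0)) h" by (rule arg_cong[where f="\<lambda>m. integral\<^sup>L m h", OF assms(3)])
    also have "\<dots> = (\<integral>\<omega>. h (Y \<omega>) \<partial>M)" unfolding Y_def by (rule integral_distr[OF Zm hm])
    finally show ?thesis .
  qed
  have summand: "cond_exp_event M (\<lambda>\<omega>. exp (- f (real i / real n) (inverse (real n) *\<^sub>R (A *v Z (int i) \<omega>))))
              {\<omega>\<in>space M. A *v Z (int i) \<omega> \<in> (\<lambda>y. real n *\<^sub>R y) ` \<Gamma>} = Fn n (real i / real n)"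
    if n: "0 < n" for n i
  proof -
    let ?Zi = "Z (int i)"
    have mem: "A *v z \<in> (\<lambda>y. real n *\<^sub>R y) ` \<Gamma> \<longleftrightarrow> inverse (real n) *\<^sub>R z \<in> W" for z
    proof
      assume "A *v z \<in> (\<lambda>y. real n *\<^sub>R y) ` \<Gamma>"
      then obtain \<gamma> where \<gamma>: "\<gamma> \<in> \<Gamma>" "A *v z = real n *\<^sub>R \<gamma>" by auto
      have "A *v (inverse (real n) *\<^sub>R z) = \<gamma>" using \<gamma> n by (simp add: matrix_vector_mult_scaleR)
      then show "inverse (real n) *\<^sub>R z \<in> W" using \<gamma> W_eq by simp
    next
      assume "inverse (real n) *\<^sub>R z \<in> W"
      then have "A *v (inverse (real n) *\<^sub>R z) \<in> \<Gamma>" using W_eq by simp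
      moreover have "A *v z = real n *\<^sub>R (A *v (inverse (real n) *\<^sub>R z))"
        using n by (simp add: matrix_vector_mult_scaleR)
      ultimately show "A *v z \<in> (\<lambda>y. real n *\<^sub>R y) ` \<Gamma>" by blast
    qed
    have B: "{\<omega>\<in>space M. A *v ?Zi \<omega> \<in> (\<lambda>y. real n *\<^sub>R y) ` \<Gamma>} = {\<omega>\<in>space M. inverse (real n) *\<^sub>R ?Zi \<omega> \<in> W}"
      using mem by auto
    have Bm: "{\<omega>\<in>space M. inverse (real n) *\<^sub>R ?Zi \<omega> \<in> W} \<in> sets M" by measurable
    have num: "(\<integral>\<omega>. indicator {\<omega>\<in>space M. inverse (real n) *\<^sub>R ?Zi \<omega> \<in> W} \<omega> *
          exp (- f (real i / real n) (inverse (real n) *\<^sub>R (A *v ?Zi \<omega>))) \<partial>M)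
       = (\<integral>\<omega>. \<phi> (real i / real n) (?Yn n \<omega>) * indicator W (?Yn n \<omega>) \<partial>M)"
    proof -
      have "(\<integral>\<omega>. indicator {\<omega>\<in>space M. inverse (real n) *\<^sub>R ?Zi \<omega> \<in> W} \<omega> *
          exp (- f (real i / real n) (inverse (real n) *\<^sub>R (A *v ?Zi \<omega>))) \<partial>M)
        = (\<integral>\<omega>. (\<lambda>z. \<phi> (real i / real n) (inverse (real n) *\<^sub>R z) * indicator W (inverse (real n) *\<^sub>R z)) (?Zi \<omega>) \<partial>M)"
        by (intro Bochner_Integration.integral_cong refl) (auto simp: \<phi>_def matrix_vector_mult_scaleR indicator_def)
      also have "\<dots> = (\<integral>\<omega>. (\<lambda>z. \<phi> (real i / real n) (inverse (real n) *\<^sub>R z) * indicator W (inverse (real n) *\<^sub>R z)) (Y \<omega>) \<partial>M)"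
        by (rule distr_eq) measurable
      finally show ?thesis by simp
    qed
    have den: "measure M {\<omega>\<in>space M. inverse (real n) *\<^sub>R ?Zi \<omega> \<in> W} = (\<integral>\<omega>. indicator W (?Yn n \<omega>) \<partial>M)"
    proof -
      have "measure M {\<omega>\<in>space M. inverse (real n) *\<^sub>R ?Zi \<omega> \<in> W}
          = (\<integral>\<omega>. indicator {\<omega>\<in>space M. inverse (real n) *\<^sub>R ?Zi \<omega> \<in> W} \<omega> \<partial>M)"
        by (simp add: Int_absorb2)
      also have "\<dots> = (\<integral>\<omega>. (\<lambda>z. indicator W (inverse (real n) *\<^sub>R z)) (?Zi \<omega>) \<partial>M)"
        by (intro Bochner_Integration.integral_cong refl) (auto simp: indicator_def)
      also have "\<dots> = (\<integral>\<omega>. (\<lambda>z. indicator W (inverse (real n) *\<^sub>R z)) (Y \<omega>) \<partial>M)"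
        by (rule distr_eq) measurable
      finally show ?thesis by simp
    qed
    show ?thesis unfolding cond_exp_event_def B num den Fn_def ..
  qed
  define H where "H n t = (\<Sum>i<n. Fn n (real i / real n) * indicator {real i / real n ..< real (Suc i) / real n} t)" for n t
  interpret UP: prob_space Unif by (rule Unif_prob)
  interpret PXP: prob_space PX by (rule PXp)
  have Hm[measurable]: "H n \<in> borel_measurable borel" for n unfolding H_def by measurable
  have gpm[measurable]: "(\<lambda>p::real \<times> (real^'d). exp (- f (fst p) (snd p))) \<in> borel_measurable borel"
    by (rule borel_measurable_continuous_onI[OF gc])
  have pairm: "(\<lambda>p. exp (- f (fst p) (snd p))) \<in> borel_measurable (M1 \<Otimes>\<^sub>M PX)"
    if s1: "sets M1 = sets (borel :: real measure)" for M1
  proof -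
    have a1: "fst \<in> measurable (M1 \<Otimes>\<^sub>M PX) M1" by (rule measurable_fst)
    have b1: "measurable (M1 \<Otimes>\<^sub>M PX) M1 = measurable (M1 \<Otimes>\<^sub>M PX) borel" by (rule measurable_cong_sets[OF refl s1])
    have fm: "fst \<in> borel_measurable (M1 \<Otimes>\<^sub>M PX)" using a1 b1 by simp
    have a2: "snd \<in> measurable (M1 \<Otimes>\<^sub>M PX) PX" by (rule measurable_snd)
    have b2: "measurable (M1 \<Otimes>\<^sub>M PX) PX = measurable (M1 \<Otimes>\<^sub>M PX) borel" by (rule measurable_cong_sets[OF refl sets_PX])
    have sm: "snd \<in> borel_measurable (M1 \<Otimes>\<^sub>M PX)" using a2 b2 by simp
    show ?thesis by (rule borel_measurable_continuous_Pair[OF fm sm]) (use gc in simp)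
  qed
  have Gm: "G \<in> borel_measurable borel"
  proof -
    have "(\<lambda>p::real \<times> (real^'d). exp (- f (fst p) (snd p))) \<in> borel_measurable (borel \<Otimes>\<^sub>M PX)"
      by (rule pairm) simp
    then have "case_prod (\<lambda>t x. exp (- f t x)) \<in> borel_measurable (borel \<Otimes>\<^sub>M PX)"
      by (simp add: case_prod_beta')
    then show ?thesis unfolding G_def by (rule PXP.borel_measurable_lebesgue_integral)
  qed
  have Hb: "\<bar>H n t\<bar> \<le> 1" for n t
  proof (cases "n = 0")
    case True then show ?thesis by (simp add: H_def)
  next
    case False
    then have n: "0 < n" by simp
    show ?thesis
    proof (cases "0 \<le> t \<and> t < 1")
      case True
      then show ?thesis unfolding H_def using step_eval[OF n, of t] Fn_bounds by simp
    next
      case False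
      then have "t < 0 \<or> 1 \<le> t" by auto
      then show ?thesis unfolding H_def using step_zero[OF n] by simp
    qed
  qed
  have Hlim: "(\<lambda>n. H n t) \<longlonglongrightarrow> G t" if t: "0 \<le> t" "t < 1" for t
  proof -
    have "eventually (\<lambda>n. Fn n (real_of_int \<lfloor>real n * t\<rfloor> / real n) = H n t) sequentially"
      using eventually_gt_at_top[of "0::nat"]
    proof eventually_elim
      case (elim n)
      have "0 \<le> \<lfloor>real n * t\<rfloor>" using t by simp
      then have "real (nat \<lfloor>real n * t\<rfloor>) = real_of_int \<lfloor>real n * t\<rfloor>" by simp
      then show ?case unfolding H_def using step_eval[OF elim t, of "\<lambda>i. Fn n (real i / real n)"] by simp
    qed
    with CC[OF floor_lim[of t]] show ?thesis by (rule Lim_transform_eventually)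
  qed
  have AE01: "AE t in Unif. t \<in> {0..<1}"
  proof (rule UP.AE_prob_1)
    have "measure Unif {0..<1} = measure lborel ({0..1} \<inter> {0..<1::real}) / measure lborel {0..1::real}"
      unfolding Unif_def by (rule measure_uniform_measure) auto
    also have "\<dots> = 1"
    proof -
      have e1: "{0..1} \<inter> {0..<1::real} = {0..<1}" by auto
      have e2: "measure lborel {0..<1::real} = 1" by (simp add: measure_def)
      have e3: "measure lborel {0..1::real} = 1" by (simp add: measure_def)
      show ?thesis unfolding e1 e2 e3 by simp
    qed
    finally show "UP.prob {0..<1} = 1" .
  qed
  have lim: "(\<lambda>n. \<integral>t. H n t \<partial>Unif) \<longlonglongrightarrow> (\<integral>t. G t \<partial>Unif)"
  proof (rule integral_dominated_convergence[where w="\<lambda>_. 1"])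
    have mU: "(borel_measurable Unif :: (real \<Rightarrow> real) set) = borel_measurable borel"
      by (rule measurable_cong_sets[OF sets_Unif refl])
    show "G \<in> borel_measurable Unif" using Gm mU by simp
    show "H n \<in> borel_measurable Unif" for n using Hm[of n] mU by simp
    show "integrable Unif (\<lambda>_. 1::real)" by simp
    show "AE t in Unif. (\<lambda>n. H n t) \<longlonglongrightarrow> G t" using AE01 by eventually_elim (auto intro: Hlim)
    show "AE t in Unif. norm (H n t) \<le> 1" for n using Hb by simp
  qed
  have RHS: "(\<integral>\<omega>. exp (- f (U \<omega>) (X \<omega>)) \<partial>N) = (\<integral>t. G t \<partial>Unif)"
  proof -
    interpret P: pair_prob_space Unif PX ..
    have pm: "(\<lambda>\<omega>. (U \<omega>, X \<omega>)) \<in> measurable N borel" by measurable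
    have intg: "integrable (Unif \<Otimes>\<^sub>M PX) (\<lambda>p. exp (- f (fst p) (snd p)))"
    proof (rule P.integrable_const_bound[where B=1])
      show "(\<lambda>p. exp (- f (fst p) (snd p))) \<in> borel_measurable (Unif \<Otimes>\<^sub>M PX)"
        by (rule pairm[OF sets_Unif])
      show "AE p in Unif \<Otimes>\<^sub>M PX. norm (exp (- f (fst p) (snd p))) \<le> 1"
        using assms(10) by simp
    qed
    have "(\<integral>\<omega>. exp (- f (U \<omega>) (X \<omega>)) \<partial>N) = integral\<^sup>L (distr N borel (\<lambda>\<omega>. (U \<omega>, X \<omega>))) (\<lambda>p. exp (- f (fst p) (snd p)))"
      using integral_distr[OF pm gpm] by simp
    also have "\<dots> = integral\<^sup>L (Unif \<Otimes>\<^sub>M PX) (\<lambda>p. exp (- f (fst p) (snd p)))"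
      using assms(15,17) by (simp add: Unif_def PX_def)
    also have "\<dots> = (\<integral>t. (\<integral>x. exp (- f t x) \<partial>PX) \<partial>Unif)"
      using P.integral_fst'[OF intg] by simp
    finally show ?thesis by (simp add: G_def)
  qed
  have "eventually (\<lambda>n. (\<integral>t. H n t \<partial>Unif) = (\<Sum>i<n. cond_exp_event M
              (\<lambda>\<omega>. exp (- f (real i / real n) (inverse (real n) *\<^sub>R (A *v Z (int i) \<omega>))))
              {\<omega>\<in>space M. A *v Z (int i) \<omega> \<in> (\<lambda>y. real n *\<^sub>R y) ` \<Gamma>}) / real n) sequentially"
    using eventually_gt_at_top[of "0::nat"]
  proof eventually_elim
    case (elim n)
    show ?case unfolding H_def step_integral[OF elim] using summand[OF elim] by simp
  qed
  with lim have "(\<lambda>n. (\<Sum>i<n. cond_exp_event M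
              (\<lambda>\<omega>. exp (- f (real i / real n) (inverse (real n) *\<^sub>R (A *v Z (int i) \<omega>))))
              {\<omega>\<in>space M. A *v Z (int i) \<omega> \<in> (\<lambda>y. real n *\<^sub>R y) ` \<Gamma>}) / real n) \<longlonglongrightarrow> (\<integral>t. G t \<partial>Unif)"
    by (rule Lim_transform_eventually)
  then show ?thesis using RHS by simp
qed


end
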